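(* Let $(G,H,\mathcal{L})$ be a cut-and-project scheme and let $a\in G$. Then there exist a cut-and-project scheme $(G,H',\mathcal{L}')$ and some $b\in H'$ such that: (a) $H$ is (identified with) an open and closed subgroup of $H'$; (b) $(a,b)\in\mathcal{L}'$; (c) $\mathcal{L}'\cap(G\times H)=\mathcal{L}$; (d) for each $W\subseteq H$ we have $\Lambda_W=\pi^G(\mathcal{L}'\cap(G\times W))$ and $a+\Lambda_W=\pi^G(\mathcal{L}'\cap(G\times(b+W)))$; (e) for each $W\subseteq H$, both $W\subseteq H'$ and $b+W\subseteq H'$ have each of the properties precompactness, non-empty interior, topological regularity and measure-theoretic regularity (with respect to $H'$) which $W$ has as a subset of $H$; (f) if $H$ is metrisable, then $H'$ is metrisable.
   Context: A cut-and-project scheme $(G,H,\mathcal{L})$ consists of locally compact abelian groups $G,H$ and a discrete cocompact subgroup (lattice) $\mathcal{L}\subseteq G\times H$ such that the coordinate projection $\pi^G$ restricted to $\mathcal{L}$ is injective and $\pi^H(\mathcal{L})$ is dense in $H$. For $W\subseteq H$ the projection set is $\Lambda_W=\pi^G(\mathcal{L}\cap(G\times W))$. For a set $W\subseteq H$: precompact means $\overline{W}$ is compact; topologically regular means $\overline{W}=\overline{W^\circ}$; measure-theoretically regular means the boundary $\partial W=\overline W\setminus W^\circ$ has Haar measure zero. *)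

theory Defs
  imports "HOL-Analysis.Analysis" "HOL-Algebra.Algebra"
begin

text \<open>Abelian groups are HOL-Algebra commutative groups (written multiplicatively,
  so the group operation is \<open>\<otimes>\<close>), equipped with an abstract topology whose
  underlying set is the carrier.\<close>

definition lca_group :: "('a, 'm) monoid_scheme \<Rightarrow> 'a topology \<Rightarrow> bool" where
  "lca_group Gr T \<longleftrightarrow>
     comm_group Gr \<and> topspace T = carrier Gr \<and>
     continuous_map (prod_topology T T) T (\<lambda>(x, y). x \<otimes>\<^bsub>Gr\<^esub> y) \<and>
     continuous_map T T (\<lambda>x. inv\<^bsub>Gr\<^esub> x) \<and>
     Hausdorff_space T \<and> locally_compact_space T"

definition is_lattice :: "('a, 'm) monoid_scheme \<Rightarrow> 'a topology \<Rightarrow> 'a set \<Rightarrow> bool" where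
  "is_lattice Gr T L \<longleftrightarrow>
     subgroup L Gr \<and>
     (\<forall>x\<in>L. \<exists>U. openin T U \<and> U \<inter> L = {x}) \<and>
     (\<exists>Q :: 'a set topology. quotient_map T Q (\<lambda>x. L #>\<^bsub>Gr\<^esub> x) \<and> compact_space Q)"

definition cut_and_project ::
  "'g monoid \<Rightarrow> 'g topology \<Rightarrow> 'h monoid \<Rightarrow> 'h topology \<Rightarrow> ('g \<times> 'h) set \<Rightarrow> bool" where
  "cut_and_project G TG H TH L \<longleftrightarrow>
     lca_group G TG \<and> lca_group H TH \<and>
     is_lattice (G \<times>\<times> H) (prod_topology TG TH) L \<and>
     inj_on fst L \<and>
     TH closure_of (snd ` L) = carrier H"

definition proj_set :: "('g \<times> 'h) set \<Rightarrow> 'h set \<Rightarrow> 'g set" where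
  "proj_set L W = fst ` {p \<in> L. snd p \<in> W}"

definition haar_measure :: "('a, 'm) monoid_scheme \<Rightarrow> 'a topology \<Rightarrow> 'a measure \<Rightarrow> bool" where
  "haar_measure Gr T \<mu> \<longleftrightarrow>
     space \<mu> = topspace T \<and> sets \<mu> = sigma_sets (topspace T) {U. openin T U} \<and>
     emeasure \<mu> (topspace T) \<noteq> 0 \<and>
     (\<forall>x\<in>carrier Gr. \<forall>A\<in>sets \<mu>. emeasure \<mu> ((\<lambda>y. x \<otimes>\<^bsub>Gr\<^esub> y) ` A) = emeasure \<mu> A) \<and>
     (\<forall>K. compactin T K \<longrightarrow> emeasure \<mu> K < \<infinity>) \<and>
     (\<forall>A\<in>sets \<mu>. emeasure \<mu> A = (INF U\<in>{U. openin T U \<and> A \<subseteq> U}. emeasure \<mu> U)) \<and>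
     (\<forall>U. openin T U \<longrightarrow> emeasure \<mu> U = (SUP K\<in>{K. compactin T K \<and> K \<subseteq> U}. emeasure \<mu> K))"

definition precompact_in :: "'a topology \<Rightarrow> 'a set \<Rightarrow> bool" where
  "precompact_in T W \<longleftrightarrow> compactin T (T closure_of W)"

definition nonempty_interior :: "'a topology \<Rightarrow> 'a set \<Rightarrow> bool" where
  "nonempty_interior T W \<longleftrightarrow> T interior_of W \<noteq> {}"

definition top_regular :: "'a topology \<Rightarrow> 'a set \<Rightarrow> bool" where
  "top_regular T W \<longleftrightarrow> T closure_of W = T closure_of (T interior_of W)"

text \<open>Boundary is a Haar null set (for every, equivalently some, Haar measure).\<close>
definition mt_regular :: "('a, 'm) monoid_scheme \<Rightarrow> 'a topology \<Rightarrow> 'a set \<Rightarrow> bool" where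
  "mt_regular Gr T W \<longleftrightarrow>
     (\<forall>\<mu>. haar_measure Gr T \<mu> \<longrightarrow> emeasure \<mu> (T closure_of W - T interior_of W) = 0)"

end

theory Submission
  imports Defs
begin

lemma divmod_aux:
  fixes s n k :: int
  shows "(s mod k + n) div k + s div k = (s + n) div k"
    and "(s mod k + n) mod k = (s + n) mod k"
proof -
  have e: "s + n = (s mod k + n) + k * (s div k)" by simp
  show "(s mod k + n) div k + s div k = (s + n) div k"
  proof (cases "k = 0")
    case True then show ?thesis by simp
  next
    case False
    have "(s mod k + n + k * (s div k)) div k = s div k + (s mod k + n) div k"
      by (rule div_mult_self2[OF False])
    then show ?thesis using e by (metis add.commute)
  qed
  show "(s mod k + n) mod k = (s + n) mod k" by (simp add: mod_add_left_eq)
qed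

lemma (in comm_group) four_swap:
  "a \<in> carrier G \<Longrightarrow> b \<in> carrier G \<Longrightarrow> c \<in> carrier G \<Longrightarrow> d \<in> carrier G \<Longrightarrow>
   a \<otimes> b \<otimes> c \<otimes> d = (a \<otimes> c) \<otimes> (b \<otimes> d)"
  by (simp add: m_ac)

locale cps_setup = G: comm_group G + H: comm_group H
  for G :: "'g monoid" and H :: "'h monoid" +
  fixes TG :: "'g topology" and TH :: "'h topology" and L :: "('g \<times> 'h) set" and a :: 'g
  assumes cps: "cut_and_project G TG H TH L" and aG: "a \<in> carrier G"
begin

lemma lcaG: "lca_group G TG" and lcaH: "lca_group H TH"
  and latt: "is_lattice (G \<times>\<times> H) (prod_topology TG TH) L"
  and injL: "inj_on fst L" and denseL: "TH closure_of (snd ` L) = carrier H"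
  using cps by (auto simp: cut_and_project_def)

lemma GH_group: "group (G \<times>\<times> H)"
  by (simp add: DirProd_group G.group_axioms H.group_axioms)

lemma L_sub: "subgroup L (G \<times>\<times> H)"
  using latt by (simp add: is_lattice_def)

lemma L_carrier: "L \<subseteq> carrier G \<times> carrier H"
  using subgroup.subset[OF L_sub] by simp

lemma L_one: "(\<one>\<^bsub>G\<^esub>, \<one>\<^bsub>H\<^esub>) \<in> L"
  using subgroup.one_closed[OF L_sub] by simp

lemma L_mult: "(x, y) \<in> L \<Longrightarrow> (x', y') \<in> L \<Longrightarrow> (x \<otimes>\<^bsub>G\<^esub> x', y \<otimes>\<^bsub>H\<^esub> y') \<in> L"
  using subgroup.m_closed[OF L_sub] by fastforce

lemma L_inv: "(x, y) \<in> L \<Longrightarrow> (inv\<^bsub>G\<^esub> x, inv\<^bsub>H\<^esub> y) \<in> L"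
proof -
  assume xy: "(x, y) \<in> L"
  then have c: "x \<in> carrier G" "y \<in> carrier H" using L_carrier by auto
  have "inv\<^bsub>G \<times>\<times> H\<^esub> (x, y) \<in> L" using subgroup.m_inv_closed[OF L_sub xy] .
  then show ?thesis using c by (simp add: inv_DirProd G.group_axioms H.group_axioms)
qed

lemma fst_hom: "fst \<in> hom (G \<times>\<times> H) G"
  by (rule homI) auto
lemma snd_hom: "snd \<in> hom (G \<times>\<times> H) H"
  by (rule homI) auto

lemma L_pow: "(x, y) \<in> L \<Longrightarrow> (x [^]\<^bsub>G\<^esub> (c::int), y [^]\<^bsub>H\<^esub> c) \<in> L"
proof -
  assume xy: "(x, y) \<in> L"
  then have c: "(x,y) \<in> carrier (G \<times>\<times> H)" using L_carrier by auto
  have m: "(x, y) [^]\<^bsub>G \<times>\<times> H\<^esub> c \<in> L"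
    using group.subgroup_int_pow_closed[OF GH_group L_sub xy] .
  have "fst ((x, y) [^]\<^bsub>G \<times>\<times> H\<^esub> c) = x [^]\<^bsub>G\<^esub> c"
    using hom_int_pow[OF fst_hom c GH_group G.group_axioms] by simp
  moreover have "snd ((x, y) [^]\<^bsub>G \<times>\<times> H\<^esub> c) = y [^]\<^bsub>H\<^esub> c"
    using hom_int_pow[OF snd_hom c GH_group H.group_axioms] by simp
  ultimately show ?thesis using m by (metis prod.collapse)
qed

lemma L_unique: "(x, y) \<in> L \<Longrightarrow> (x, y') \<in> L \<Longrightarrow> y = y'"
  using injL by (metis fst_conv inj_onD prod.inject)

definition kn :: nat where
  "kn = (if \<exists>m. 0 < m \<and> a [^]\<^bsub>G\<^esub> (int m) \<in> fst ` L
         then LEAST m. 0 < m \<and> a [^]\<^bsub>G\<^esub> (int m) \<in> fst ` L else 0)"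

definition k :: int where "k = int kn"

lemma k_nonneg: "0 \<le> k" by (simp add: k_def)

lemma apow_S: "a [^]\<^bsub>G\<^esub> (m::int) \<in> fst ` L \<longleftrightarrow> k dvd m"
proof
  assume "k dvd m"
  then obtain q where q: "m = k * q" by auto
  show "a [^]\<^bsub>G\<^esub> m \<in> fst ` L"
  proof (cases "\<exists>m. 0 < m \<and> a [^]\<^bsub>G\<^esub> (int m) \<in> fst ` L")
    case True
    then have "0 < kn \<and> a [^]\<^bsub>G\<^esub> (int kn) \<in> fst ` L"
      unfolding kn_def using LeastI_ex[of "\<lambda>m. 0 < m \<and> a [^]\<^bsub>G\<^esub> (int m) \<in> fst ` L"] by simp
    then obtain y where "(a [^]\<^bsub>G\<^esub> k, y) \<in> L" by (auto simp: k_def)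
    then have "((a [^]\<^bsub>G\<^esub> k) [^]\<^bsub>G\<^esub> q, y [^]\<^bsub>H\<^esub> q) \<in> L" by (rule L_pow)
    then show ?thesis using q G.int_pow_pow[OF aG] by force
  next
    case False
    then have "kn = 0" unfolding kn_def by (simp only: if_not_P[OF False] if_False)
    then have "k = 0" by (simp add: k_def)
    then show ?thesis using q L_one by force
  qed
next
  assume m: "a [^]\<^bsub>G\<^esub> m \<in> fst ` L"
  have neg: "a [^]\<^bsub>G\<^esub> (- m) \<in> fst ` L"
  proof -
    obtain y where "(a [^]\<^bsub>G\<^esub> m, y) \<in> L" using m by force
    from L_inv[OF this] show ?thesis using G.int_pow_neg[OF aG] by force
  qed
  show "k dvd m"
  proof (cases "\<exists>m. 0 < m \<and> a [^]\<^bsub>G\<^esub> (int m) \<in> fst ` L")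
    case False
    then have "kn = 0" unfolding kn_def by (simp only: if_not_P[OF False] if_False)
    then have k0: "k = 0" by (simp add: k_def)
    have "m = 0"
    proof (rule ccontr)
      assume "m \<noteq> 0"
      then consider "m > 0" | "-m > 0" by linarith
      then show False
      proof cases
        case 1
        then have "0 < nat m \<and> a [^]\<^bsub>G\<^esub> (int (nat m)) \<in> fst ` L" using m by simp
        then show False using False by blast
      next
        case 2
        then have "0 < nat (-m) \<and> a [^]\<^bsub>G\<^esub> (int (nat (-m))) \<in> fst ` L" using neg by simp
        then show False using False by blast
      qed
    qed
    then show ?thesis by simp
  next
    case True
    then have kmin: "\<And>j. 0 < j \<Longrightarrow> a [^]\<^bsub>G\<^esub> (int j) \<in> fst ` L \<Longrightarrow> kn \<le> j"
      unfolding kn_def by (simp add: Least_le)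
    have kpos: "0 < kn \<and> a [^]\<^bsub>G\<^esub> (int kn) \<in> fst ` L"
      using True unfolding kn_def using LeastI_ex[of "\<lambda>m. 0 < m \<and> a [^]\<^bsub>G\<^esub> (int m) \<in> fst ` L"] by simp
    have kS: "a [^]\<^bsub>G\<^esub> (k * (m div k)) \<in> fst ` L"
    proof -
      obtain y where "(a [^]\<^bsub>G\<^esub> k, y) \<in> L" using kpos by (auto simp: k_def)
      then have "((a [^]\<^bsub>G\<^esub> k) [^]\<^bsub>G\<^esub> (m div k), y [^]\<^bsub>H\<^esub> (m div k)) \<in> L" by (rule L_pow)
      then show ?thesis using G.int_pow_pow[OF aG] by force
    qed
    have r: "a [^]\<^bsub>G\<^esub> (m mod k) \<in> fst ` L"
    proof -
      obtain y1 where y1: "(a [^]\<^bsub>G\<^esub> m, y1) \<in> L" using m by force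
      obtain y2 where y2: "(a [^]\<^bsub>G\<^esub> (k * (m div k)), y2) \<in> L" using kS by force
      have "(a [^]\<^bsub>G\<^esub> m \<otimes>\<^bsub>G\<^esub> inv\<^bsub>G\<^esub> (a [^]\<^bsub>G\<^esub> (k * (m div k))), y1 \<otimes>\<^bsub>H\<^esub> inv\<^bsub>H\<^esub> y2) \<in> L"
        using L_mult[OF y1 L_inv[OF y2]] .
      moreover have "a [^]\<^bsub>G\<^esub> m \<otimes>\<^bsub>G\<^esub> inv\<^bsub>G\<^esub> (a [^]\<^bsub>G\<^esub> (k * (m div k))) = a [^]\<^bsub>G\<^esub> (m mod k)"
        using G.int_pow_diff[OF aG, of m "k * (m div k)", symmetric]
        by (simp add: minus_mult_div_eq_mod)
      ultimately show ?thesis by force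
    qed
    have "m mod k = 0"
    proof (rule ccontr)
      assume ne: "m mod k \<noteq> 0"
      have kp: "0 < k" using kpos by (simp add: k_def)
      have "0 < m mod k" using ne kp pos_mod_sign[of k m] by linarith
      moreover have "m mod k < k" using kp by simp
      ultimately show False using kmin[of "nat (m mod k)"] r by (simp add: k_def)
    qed
    then show ?thesis by (simp add: dvd_eq_mod_eq_0)
  qed
qed

definition y0 :: 'h where "y0 = (SOME y. (a [^]\<^bsub>G\<^esub> k, y) \<in> L)"

lemma y0_L: "(a [^]\<^bsub>G\<^esub> k, y0) \<in> L"
proof -
  have "a [^]\<^bsub>G\<^esub> k \<in> fst ` L" using apow_S by simp
  then have "\<exists>y. (a [^]\<^bsub>G\<^esub> k, y) \<in> L" by force
  then show ?thesis unfolding y0_def by (rule someI_ex)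
qed

lemma y0_H: "y0 \<in> carrier H" using y0_L L_carrier by auto

lemma Lk_pow: "(a [^]\<^bsub>G\<^esub> (k * c), y0 [^]\<^bsub>H\<^esub> (c::int)) \<in> L"
  using L_pow[OF y0_L, of c] G.int_pow_pow[OF aG] by simp

definition R :: "int set" where "R = {n. n mod k = n}"

lemma R_div: "r \<in> R \<Longrightarrow> r div k = 0"
proof -
  assume "r \<in> R"
  then have "r mod k = r" by (simp add: R_def)
  then have "k * (r div k) = 0" using mult_div_mod_eq[of k r] by linarith
  then show ?thesis by (cases "k = 0") auto
qed

lemma R_mod: "r \<in> R \<Longrightarrow> r mod k = r" by (simp add: R_def)
lemma mod_R [simp]: "n mod k \<in> R" by (simp add: R_def)
lemma zero_R [simp]: "0 \<in> R" by (simp add: R_def)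

definition H' :: "('h \<times> int) monoid" where
  "H' = \<lparr>carrier = carrier H \<times> R,
         mult = (\<lambda>p q. (fst p \<otimes>\<^bsub>H\<^esub> fst q \<otimes>\<^bsub>H\<^esub> y0 [^]\<^bsub>H\<^esub> ((snd p + snd q) div k), (snd p + snd q) mod k)),
         one = (\<one>\<^bsub>H\<^esub>, 0)\<rparr>"

lemma carrier_H': "carrier H' = carrier H \<times> R" by (simp add: H'_def)
lemma one_H': "\<one>\<^bsub>H'\<^esub> = (\<one>\<^bsub>H\<^esub>, 0)" by (simp add: H'_def)
lemma mult_H': "(h, n) \<otimes>\<^bsub>H'\<^esub> (h', n') = (h \<otimes>\<^bsub>H\<^esub> h' \<otimes>\<^bsub>H\<^esub> y0 [^]\<^bsub>H\<^esub> ((n + n') div k), (n + n') mod k)"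
  by (simp add: H'_def)

lemma comm_group_H': "comm_group H'"
proof (rule comm_groupI)
  fix x y assume "x \<in> carrier H'" "y \<in> carrier H'"
  then show "x \<otimes>\<^bsub>H'\<^esub> y \<in> carrier H'"
    by (cases x; cases y) (auto simp: carrier_H' mult_H' y0_H)
next
  show "\<one>\<^bsub>H'\<^esub> \<in> carrier H'" by (simp add: one_H' carrier_H')
next
  fix x y z assume "x \<in> carrier H'" "y \<in> carrier H'" "z \<in> carrier H'"
  then obtain h1 n1 h2 n2 h3 n3 where x: "x = (h1, n1)" and y: "y = (h2, n2)" and z: "z = (h3, n3)"
    and h: "h1 \<in> carrier H" "h2 \<in> carrier H" "h3 \<in> carrier H"
    by (auto simp: carrier_H')
  have e1: "((n1 + n2) mod k + n3) div k + (n1 + n2) div k = (n1 + n2 + n3) div k"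
    using divmod_aux(1)[of "n1+n2" k n3] by simp
  have e2: "((n2 + n3) mod k + n1) div k + (n2 + n3) div k = (n1 + n2 + n3) div k"
    using divmod_aux(1)[of "n2+n3" k n1] by (simp add: ac_simps)
  have e3: "((n1 + n2) mod k + n3) mod k = (n1 + n2 + n3) mod k"
    using divmod_aux(2)[of "n1+n2" k n3] by simp
  have e4: "(n1 + (n2 + n3) mod k) mod k = (n1 + n2 + n3) mod k"
    using divmod_aux(2)[of "n2+n3" k n1] by (simp add: ac_simps)
  have e5: "(n1 + (n2 + n3) mod k) div k + (n2 + n3) div k = (n1 + n2 + n3) div k"
    using e2 by (simp add: ac_simps)
  have yc: "\<And>i. y0 [^]\<^bsub>H\<^esub> (i::int) \<in> carrier H" using y0_H by simp
  have "h1 \<otimes>\<^bsub>H\<^esub> h2 \<otimes>\<^bsub>H\<^esub> y0 [^]\<^bsub>H\<^esub> ((n1 + n2) div k) \<otimes>\<^bsub>H\<^esub> h3 \<otimes>\<^bsub>H\<^esub> y0 [^]\<^bsub>H\<^esub> (((n1 + n2) mod k + n3) div k)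
     = h1 \<otimes>\<^bsub>H\<^esub> h2 \<otimes>\<^bsub>H\<^esub> h3 \<otimes>\<^bsub>H\<^esub> (y0 [^]\<^bsub>H\<^esub> ((n1 + n2) div k) \<otimes>\<^bsub>H\<^esub> y0 [^]\<^bsub>H\<^esub> (((n1 + n2) mod k + n3) div k))"
    using h yc by (simp add: H.m_ac)
  also have "\<dots> = h1 \<otimes>\<^bsub>H\<^esub> h2 \<otimes>\<^bsub>H\<^esub> h3 \<otimes>\<^bsub>H\<^esub> y0 [^]\<^bsub>H\<^esub> ((n1 + n2 + n3) div k)"
    using H.int_pow_mult[OF y0_H, symmetric] e1 by (simp add: ac_simps)
  finally have l: "h1 \<otimes>\<^bsub>H\<^esub> h2 \<otimes>\<^bsub>H\<^esub> y0 [^]\<^bsub>H\<^esub> ((n1 + n2) div k) \<otimes>\<^bsub>H\<^esub> h3 \<otimes>\<^bsub>H\<^esub> y0 [^]\<^bsub>H\<^esub> (((n1 + n2) mod k + n3) div k)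
     = h1 \<otimes>\<^bsub>H\<^esub> h2 \<otimes>\<^bsub>H\<^esub> h3 \<otimes>\<^bsub>H\<^esub> y0 [^]\<^bsub>H\<^esub> ((n1 + n2 + n3) div k)" .
  have "h1 \<otimes>\<^bsub>H\<^esub> (h2 \<otimes>\<^bsub>H\<^esub> h3 \<otimes>\<^bsub>H\<^esub> y0 [^]\<^bsub>H\<^esub> ((n2 + n3) div k)) \<otimes>\<^bsub>H\<^esub> y0 [^]\<^bsub>H\<^esub> ((n1 + (n2 + n3) mod k) div k)
     = h1 \<otimes>\<^bsub>H\<^esub> h2 \<otimes>\<^bsub>H\<^esub> h3 \<otimes>\<^bsub>H\<^esub> (y0 [^]\<^bsub>H\<^esub> ((n1 + (n2 + n3) mod k) div k) \<otimes>\<^bsub>H\<^esub> y0 [^]\<^bsub>H\<^esub> ((n2 + n3) div k))"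
    using h yc by (simp add: H.m_ac)
  also have "\<dots> = h1 \<otimes>\<^bsub>H\<^esub> h2 \<otimes>\<^bsub>H\<^esub> h3 \<otimes>\<^bsub>H\<^esub> y0 [^]\<^bsub>H\<^esub> ((n1 + n2 + n3) div k)"
    using H.int_pow_mult[OF y0_H, symmetric] e5 by simp
  finally have r: "h1 \<otimes>\<^bsub>H\<^esub> (h2 \<otimes>\<^bsub>H\<^esub> h3 \<otimes>\<^bsub>H\<^esub> y0 [^]\<^bsub>H\<^esub> ((n2 + n3) div k)) \<otimes>\<^bsub>H\<^esub> y0 [^]\<^bsub>H\<^esub> ((n1 + (n2 + n3) mod k) div k)
     = h1 \<otimes>\<^bsub>H\<^esub> h2 \<otimes>\<^bsub>H\<^esub> h3 \<otimes>\<^bsub>H\<^esub> y0 [^]\<^bsub>H\<^esub> ((n1 + n2 + n3) div k)" .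
  show "x \<otimes>\<^bsub>H'\<^esub> y \<otimes>\<^bsub>H'\<^esub> z = x \<otimes>\<^bsub>H'\<^esub> (y \<otimes>\<^bsub>H'\<^esub> z)"
    unfolding x y z mult_H' using l r e3 e4 by (simp add: ac_simps)
next
  fix x y assume "x \<in> carrier H'" "y \<in> carrier H'"
  then show "x \<otimes>\<^bsub>H'\<^esub> y = y \<otimes>\<^bsub>H'\<^esub> x"
    by (cases x; cases y) (auto simp: carrier_H' mult_H' H.m_comm add.commute)
next
  fix x assume "x \<in> carrier H'"
  then show "\<one>\<^bsub>H'\<^esub> \<otimes>\<^bsub>H'\<^esub> x = x"
    by (cases x) (auto simp: carrier_H' mult_H' one_H' R_div R_mod)
next
  fix x assume "x \<in> carrier H'"
  then obtain h n where x: "x = (h, n)" and h: "h \<in> carrier H" and n: "n \<in> R"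
    by (auto simp: carrier_H')
  define t where "t = (- n) mod k"
  define c where "c = (- n) div k"
  have tn: "t + n = k * (- c)" using mult_div_mod_eq[of k "-n"] unfolding t_def c_def by linarith
  have d: "(t + n) div k = - c"
  proof (cases "k = 0")
    case True then show ?thesis by (simp add: c_def)
  next
    case False show ?thesis unfolding tn using False by (rule nonzero_mult_div_cancel_left)
  qed
  have m: "(t + n) mod k = 0" by (simp only: tn mod_mult_self1_is_0)
  let ?y = "(inv\<^bsub>H\<^esub> h \<otimes>\<^bsub>H\<^esub> y0 [^]\<^bsub>H\<^esub> c, t)"
  have "?y \<in> carrier H'" using h y0_H by (simp add: carrier_H' t_def)
  moreover have "?y \<otimes>\<^bsub>H'\<^esub> x = \<one>\<^bsub>H'\<^esub>"
  proof -
    have "inv\<^bsub>H\<^esub> h \<otimes>\<^bsub>H\<^esub> y0 [^]\<^bsub>H\<^esub> c \<otimes>\<^bsub>H\<^esub> h \<otimes>\<^bsub>H\<^esub> y0 [^]\<^bsub>H\<^esub> (- c)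
        = (inv\<^bsub>H\<^esub> h \<otimes>\<^bsub>H\<^esub> h) \<otimes>\<^bsub>H\<^esub> (y0 [^]\<^bsub>H\<^esub> c \<otimes>\<^bsub>H\<^esub> y0 [^]\<^bsub>H\<^esub> (- c))"
      using h y0_H by (simp add: H.four_swap)
    also have "\<dots> = \<one>\<^bsub>H\<^esub>"
      using h y0_H H.int_pow_mult[OF y0_H, of c "-c", symmetric] by simp
    finally show ?thesis unfolding x mult_H' one_H' using d m by simp
  qed
  ultimately show "\<exists>y\<in>carrier H'. y \<otimes>\<^bsub>H'\<^esub> x = \<one>\<^bsub>H'\<^esub>" by blast
qed

end

lemma (in comm_group) solve1:
  "p \<in> carrier G \<Longrightarrow> q \<in> carrier G \<Longrightarrow> x \<in> carrier G \<Longrightarrow> x' \<in> carrier G \<Longrightarrow>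
   p \<otimes> x = q \<otimes> x' \<Longrightarrow> p \<otimes> inv q = x' \<otimes> inv x"
  by (smt (verit, ccfv_SIG) comm_groupE(3) comm_group_axioms comm_inv_char
    m_closed m_comm r_inv_ex r_one)

lemma (in comm_group) ac1:
  "a \<in> carrier G \<Longrightarrow> b \<in> carrier G \<Longrightarrow> c \<in> carrier G \<Longrightarrow> d \<in> carrier G \<Longrightarrow>
   a \<otimes> b \<otimes> (c \<otimes> d) = (a \<otimes> c) \<otimes> (b \<otimes> d)"
  by (simp add: m_ac)
lemma (in comm_group) ac2:
  "a \<in> carrier G \<Longrightarrow> b \<in> carrier G \<Longrightarrow> c \<in> carrier G \<Longrightarrow> d \<in> carrier G \<Longrightarrow>
   (a \<otimes> b) \<otimes> (c \<otimes> d) = a \<otimes> (c \<otimes> d \<otimes> b)"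
  by (simp add: m_ac)
lemma (in comm_group) ac3:
  "a \<in> carrier G \<Longrightarrow> b \<in> carrier G \<Longrightarrow> c \<in> carrier G \<Longrightarrow>
   a \<otimes> (b \<otimes> c) = (a \<otimes> c) \<otimes> b"
  by (simp add: m_ac)
lemma (in comm_group) cancel1:
  "a \<in> carrier G \<Longrightarrow> b \<in> carrier G \<Longrightarrow> c \<in> carrier G \<Longrightarrow> (a \<otimes> b) \<otimes> (inv b \<otimes> c) = a \<otimes> c"
  by (metis ac2 inv_closed m_comm one_closed r_inv r_one)

context cps_setup
begin

lemma group_H': "group H'" using comm_group_H' by (simp add: comm_group_def)

lemma inv_H': "h \<in> carrier H \<Longrightarrow> n \<in> R \<Longrightarrow>
  inv\<^bsub>H'\<^esub> (h, n) = (inv\<^bsub>H\<^esub> h \<otimes>\<^bsub>H\<^esub> y0 [^]\<^bsub>H\<^esub> ((- n) div k), (- n) mod k)"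
proof -
  assume h: "h \<in> carrier H" and n: "n \<in> R"
  define t where "t = (- n) mod k"
  define c where "c = (- n) div k"
  have tn: "t + n = k * (- c)" using mult_div_mod_eq[of k "-n"] unfolding t_def c_def by linarith
  have d: "(t + n) div k = - c"
  proof (cases "k = 0")
    case True then show ?thesis by (simp add: c_def)
  next
    case False show ?thesis unfolding tn using False by (rule nonzero_mult_div_cancel_left)
  qed
  have m: "(t + n) mod k = 0" by (simp only: tn mod_mult_self1_is_0)
  have "inv\<^bsub>H\<^esub> h \<otimes>\<^bsub>H\<^esub> y0 [^]\<^bsub>H\<^esub> c \<otimes>\<^bsub>H\<^esub> h \<otimes>\<^bsub>H\<^esub> y0 [^]\<^bsub>H\<^esub> (- c)
      = (inv\<^bsub>H\<^esub> h \<otimes>\<^bsub>H\<^esub> h) \<otimes>\<^bsub>H\<^esub> (y0 [^]\<^bsub>H\<^esub> c \<otimes>\<^bsub>H\<^esub> y0 [^]\<^bsub>H\<^esub> (- c))"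
    using h y0_H by (simp add: H.four_swap)
  also have "\<dots> = \<one>\<^bsub>H\<^esub>"
    using h y0_H H.int_pow_mult[OF y0_H, of c "-c", symmetric] by simp
  finally have "(inv\<^bsub>H\<^esub> h \<otimes>\<^bsub>H\<^esub> y0 [^]\<^bsub>H\<^esub> c, t) \<otimes>\<^bsub>H'\<^esub> (h, n) = \<one>\<^bsub>H'\<^esub>"
    unfolding mult_H' one_H' using d m by simp
  then show ?thesis unfolding t_def[symmetric] c_def[symmetric]
    by (intro group.inv_equality[OF group_H']) (use h n y0_H in \<open>auto simp: carrier_H' t_def\<close>)
qed

definition L' :: "('g \<times> ('h \<times> int)) set" where
  "L' = {(a [^]\<^bsub>G\<^esub> r \<otimes>\<^bsub>G\<^esub> x, (y, r)) | x y r. (x, y) \<in> L \<and> r \<in> R}"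

lemma L'I: "(x, y) \<in> L \<Longrightarrow> r \<in> R \<Longrightarrow> (a [^]\<^bsub>G\<^esub> r \<otimes>\<^bsub>G\<^esub> x, (y, r)) \<in> L'"
  unfolding L'_def by (rule CollectI, rule exI[of _ x], rule exI[of _ y], rule exI[of _ r]) simp

lemma L'E:
  assumes "p \<in> L'"
  obtains x y r where "p = (a [^]\<^bsub>G\<^esub> r \<otimes>\<^bsub>G\<^esub> x, (y, r))" "(x, y) \<in> L" "r \<in> R"
  using assms unfolding L'_def by blast

definition b :: "'h \<times> int" where "b = (y0 [^]\<^bsub>H\<^esub> (1 div k), 1 mod k)"

definition iota :: "'h \<Rightarrow> 'h \<times> int" where "iota h = (h, 0)"

lemma GH'_group: "group (G \<times>\<times> H')"
  by (simp add: DirProd_group G.group_axioms group_H')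

lemma apow_carrier [simp]: "a [^]\<^bsub>G\<^esub> (r::int) \<in> carrier G" using aG by simp
lemma y0pow_carrier [simp]: "y0 [^]\<^bsub>H\<^esub> (r::int) \<in> carrier H" using y0_H by simp

lemma apow_split: "a [^]\<^bsub>G\<^esub> (s::int) = a [^]\<^bsub>G\<^esub> (s mod k) \<otimes>\<^bsub>G\<^esub> a [^]\<^bsub>G\<^esub> (k * (s div k))"
  using G.int_pow_mult[OF aG, of "s mod k" "k * (s div k)"] by (simp add: add.commute)

lemma L'_sub: "subgroup L' (G \<times>\<times> H')"
proof (rule group.subgroupI[OF GH'_group])
  show "L' \<subseteq> carrier (G \<times>\<times> H')"
  proof
    fix p assume "p \<in> L'"
    then obtain x y r where p: "p = (a [^]\<^bsub>G\<^esub> r \<otimes>\<^bsub>G\<^esub> x, (y, r))" and xy: "(x, y) \<in> L" and r: "r \<in> R"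
      by (rule L'E)
    have "x \<in> carrier G" "y \<in> carrier H" using xy L_carrier by auto
    then show "p \<in> carrier (G \<times>\<times> H')" using p r by (simp add: carrier_H')
  qed
  have "(a [^]\<^bsub>G\<^esub> (0::int) \<otimes>\<^bsub>G\<^esub> \<one>\<^bsub>G\<^esub>, (\<one>\<^bsub>H\<^esub>, 0::int)) \<in> L'"
    using L'I[OF L_one zero_R] .
  then show "L' \<noteq> {}" by blast
next
  fix p assume "p \<in> L'"
  then obtain x y r where p: "p = (a [^]\<^bsub>G\<^esub> r \<otimes>\<^bsub>G\<^esub> x, (y, r))" and xy: "(x, y) \<in> L" and r: "r \<in> R"
    by (rule L'E)
  have x: "x \<in> carrier G" and y: "y \<in> carrier H" using xy L_carrier by auto
  define t where "t = (- r) mod k"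
  define c where "c = (- r) div k"
  have XY: "(inv\<^bsub>G\<^esub> x \<otimes>\<^bsub>G\<^esub> a [^]\<^bsub>G\<^esub> (k * c), inv\<^bsub>H\<^esub> y \<otimes>\<^bsub>H\<^esub> y0 [^]\<^bsub>H\<^esub> c) \<in> L"
    using L_mult[OF L_inv[OF xy] Lk_pow] .
  have "inv\<^bsub>G\<^esub> (a [^]\<^bsub>G\<^esub> r \<otimes>\<^bsub>G\<^esub> x) = inv\<^bsub>G\<^esub> (a [^]\<^bsub>G\<^esub> r) \<otimes>\<^bsub>G\<^esub> inv\<^bsub>G\<^esub> x"
    using x by (simp add: G.inv_mult)
  also have "inv\<^bsub>G\<^esub> (a [^]\<^bsub>G\<^esub> r) = a [^]\<^bsub>G\<^esub> (- r)" using G.int_pow_neg[OF aG] by simp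
  also have "\<dots> = a [^]\<^bsub>G\<^esub> t \<otimes>\<^bsub>G\<^esub> a [^]\<^bsub>G\<^esub> (k * c)" unfolding t_def c_def by (rule apow_split)
  also have "a [^]\<^bsub>G\<^esub> t \<otimes>\<^bsub>G\<^esub> a [^]\<^bsub>G\<^esub> (k * c) \<otimes>\<^bsub>G\<^esub> inv\<^bsub>G\<^esub> x
      = a [^]\<^bsub>G\<^esub> t \<otimes>\<^bsub>G\<^esub> (inv\<^bsub>G\<^esub> x \<otimes>\<^bsub>G\<^esub> a [^]\<^bsub>G\<^esub> (k * c))"
    using x by (simp add: G.ac3)
  finally have e: "inv\<^bsub>G\<^esub> (a [^]\<^bsub>G\<^esub> r \<otimes>\<^bsub>G\<^esub> x) = a [^]\<^bsub>G\<^esub> t \<otimes>\<^bsub>G\<^esub> (inv\<^bsub>G\<^esub> x \<otimes>\<^bsub>G\<^esub> a [^]\<^bsub>G\<^esub> (k * c))" .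
  have "inv\<^bsub>G \<times>\<times> H'\<^esub> p = (inv\<^bsub>G\<^esub> (a [^]\<^bsub>G\<^esub> r \<otimes>\<^bsub>G\<^esub> x), inv\<^bsub>H'\<^esub> (y, r))"
    unfolding p using x y r by (simp add: inv_DirProd G.group_axioms group_H' carrier_H')
  also have "\<dots> = (a [^]\<^bsub>G\<^esub> t \<otimes>\<^bsub>G\<^esub> (inv\<^bsub>G\<^esub> x \<otimes>\<^bsub>G\<^esub> a [^]\<^bsub>G\<^esub> (k * c)), (inv\<^bsub>H\<^esub> y \<otimes>\<^bsub>H\<^esub> y0 [^]\<^bsub>H\<^esub> c, t))"
    unfolding e inv_H'[OF y r] t_def c_def ..
  finally show "inv\<^bsub>G \<times>\<times> H'\<^esub> p \<in> L'"
    using L'I[OF XY, of t] by (simp add: t_def)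
next
  fix p q assume pL: "p \<in> L'" and qL: "q \<in> L'"
  obtain x y r where p: "p = (a [^]\<^bsub>G\<^esub> r \<otimes>\<^bsub>G\<^esub> x, (y, r))" and xy: "(x, y) \<in> L" and r: "r \<in> R"
    using pL by (rule L'E)
  obtain x' y' s where q: "q = (a [^]\<^bsub>G\<^esub> s \<otimes>\<^bsub>G\<^esub> x', (y', s))" and xy': "(x', y') \<in> L" and s: "s \<in> R"
    using qL by (rule L'E)
  have x: "x \<in> carrier G" "x' \<in> carrier G" and y: "y \<in> carrier H" "y' \<in> carrier H"
    using xy xy' L_carrier by auto
  define t where "t = (r + s) mod k"
  define c where "c = (r + s) div k"
  have XY: "(x \<otimes>\<^bsub>G\<^esub> x' \<otimes>\<^bsub>G\<^esub> a [^]\<^bsub>G\<^esub> (k * c), y \<otimes>\<^bsub>H\<^esub> y' \<otimes>\<^bsub>H\<^esub> y0 [^]\<^bsub>H\<^esub> c) \<in> L"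
    using L_mult[OF L_mult[OF xy xy'] Lk_pow] .
  have "a [^]\<^bsub>G\<^esub> r \<otimes>\<^bsub>G\<^esub> x \<otimes>\<^bsub>G\<^esub> (a [^]\<^bsub>G\<^esub> s \<otimes>\<^bsub>G\<^esub> x')
      = (a [^]\<^bsub>G\<^esub> r \<otimes>\<^bsub>G\<^esub> a [^]\<^bsub>G\<^esub> s) \<otimes>\<^bsub>G\<^esub> (x \<otimes>\<^bsub>G\<^esub> x')"
    using x by (simp add: G.ac1)
  also have "a [^]\<^bsub>G\<^esub> r \<otimes>\<^bsub>G\<^esub> a [^]\<^bsub>G\<^esub> s = a [^]\<^bsub>G\<^esub> (r + s)"
    using G.int_pow_mult[OF aG] by simp
  also have "\<dots> = a [^]\<^bsub>G\<^esub> t \<otimes>\<^bsub>G\<^esub> a [^]\<^bsub>G\<^esub> (k * c)" unfolding t_def c_def by (rule apow_split)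
  also have "a [^]\<^bsub>G\<^esub> t \<otimes>\<^bsub>G\<^esub> a [^]\<^bsub>G\<^esub> (k * c) \<otimes>\<^bsub>G\<^esub> (x \<otimes>\<^bsub>G\<^esub> x')
      = a [^]\<^bsub>G\<^esub> t \<otimes>\<^bsub>G\<^esub> (x \<otimes>\<^bsub>G\<^esub> x' \<otimes>\<^bsub>G\<^esub> a [^]\<^bsub>G\<^esub> (k * c))"
    using x by (simp add: G.ac2)
  finally have e: "a [^]\<^bsub>G\<^esub> r \<otimes>\<^bsub>G\<^esub> x \<otimes>\<^bsub>G\<^esub> (a [^]\<^bsub>G\<^esub> s \<otimes>\<^bsub>G\<^esub> x')
      = a [^]\<^bsub>G\<^esub> t \<otimes>\<^bsub>G\<^esub> (x \<otimes>\<^bsub>G\<^esub> x' \<otimes>\<^bsub>G\<^esub> a [^]\<^bsub>G\<^esub> (k * c))" .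
  have "p \<otimes>\<^bsub>G \<times>\<times> H'\<^esub> q = (a [^]\<^bsub>G\<^esub> t \<otimes>\<^bsub>G\<^esub> (x \<otimes>\<^bsub>G\<^esub> x' \<otimes>\<^bsub>G\<^esub> a [^]\<^bsub>G\<^esub> (k * c)), (y \<otimes>\<^bsub>H\<^esub> y' \<otimes>\<^bsub>H\<^esub> y0 [^]\<^bsub>H\<^esub> c, t))"
    unfolding p q mult_DirProd mult_H' e t_def c_def ..
  then show "p \<otimes>\<^bsub>G \<times>\<times> H'\<^esub> q \<in> L'"
    using L'I[OF XY, of t] by (simp add: t_def)
qed

lemma L'_inj: "inj_on fst L'"
proof (rule inj_onI)
  fix p q assume pL: "p \<in> L'" and qL: "q \<in> L'" and eq: "fst p = fst q"
  obtain x y r where p: "p = (a [^]\<^bsub>G\<^esub> r \<otimes>\<^bsub>G\<^esub> x, (y, r))" and xy: "(x, y) \<in> L" and r: "r \<in> R"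
    using pL by (rule L'E)
  obtain x' y' s where q: "q = (a [^]\<^bsub>G\<^esub> s \<otimes>\<^bsub>G\<^esub> x', (y', s))" and xy': "(x', y') \<in> L" and s: "s \<in> R"
    using qL by (rule L'E)
  have x: "x \<in> carrier G" "x' \<in> carrier G" and y: "y \<in> carrier H" "y' \<in> carrier H"
    using xy xy' L_carrier by auto
  have e: "a [^]\<^bsub>G\<^esub> r \<otimes>\<^bsub>G\<^esub> x = a [^]\<^bsub>G\<^esub> s \<otimes>\<^bsub>G\<^esub> x'" using eq p q by simp
  have "a [^]\<^bsub>G\<^esub> r \<otimes>\<^bsub>G\<^esub> inv\<^bsub>G\<^esub> (a [^]\<^bsub>G\<^esub> s) = x' \<otimes>\<^bsub>G\<^esub> inv\<^bsub>G\<^esub> x"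
    using G.solve1[OF _ _ x(1) x(2) e] by simp
  then have "a [^]\<^bsub>G\<^esub> (r - s) = x' \<otimes>\<^bsub>G\<^esub> inv\<^bsub>G\<^esub> x"
    using G.int_pow_diff[OF aG] by simp
  moreover have "(x' \<otimes>\<^bsub>G\<^esub> inv\<^bsub>G\<^esub> x, y' \<otimes>\<^bsub>H\<^esub> inv\<^bsub>H\<^esub> y) \<in> L"
    using L_mult[OF xy' L_inv[OF xy]] .
  ultimately have "a [^]\<^bsub>G\<^esub> (r - s) \<in> fst ` L" by force
  then have "k dvd (r - s)" using apow_S by simp
  then have "r mod k = s mod k" by (simp add: mod_eq_dvd_iff)
  then have rs: "r = s" using R_mod[OF r] R_mod[OF s] by linarith
  have "a [^]\<^bsub>G\<^esub> r \<otimes>\<^bsub>G\<^esub> x = a [^]\<^bsub>G\<^esub> r \<otimes>\<^bsub>G\<^esub> x'" using e rs by simp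
  then have "x = x'" using G.l_cancel[of "a [^]\<^bsub>G\<^esub> r" x x'] x by simp
  then have "y = y'" using L_unique xy xy' by simp
  then show "p = q" using p q rs \<open>x = x'\<close> by simp
qed

lemma iota_hom: "iota \<in> hom H H'"
  by (rule homI) (auto simp: iota_def carrier_H' mult_H')

lemma iota_inj: "inj_on iota (carrier H)"
  by (simp add: inj_on_def iota_def)

lemma iota_img: "iota ` W = W \<times> {0}"
  by (auto simp: iota_def)

lemma iota_subgroup: "subgroup (iota ` carrier H) H'"
proof (rule group.subgroupI[OF group_H'])
  show "iota ` carrier H \<subseteq> carrier H'" by (auto simp: iota_def carrier_H')
  show "iota ` carrier H \<noteq> {}" using H.one_closed by blast
next
  fix p assume "p \<in> iota ` carrier H"
  then obtain h where p: "p = (h, 0)" and h: "h \<in> carrier H" by (auto simp: iota_def)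
  show "inv\<^bsub>H'\<^esub> p \<in> iota ` carrier H"
    unfolding p inv_H'[OF h zero_R] using h by (auto simp: iota_def)
next
  fix p q assume "p \<in> iota ` carrier H" "q \<in> iota ` carrier H"
  then show "p \<otimes>\<^bsub>H'\<^esub> q \<in> iota ` carrier H"
    by (auto simp: iota_def mult_H')
qed

lemma b_carrier: "b \<in> carrier H'" by (simp add: b_def carrier_H')

lemma ab_L': "(a, b) \<in> L'"
proof -
  have "a [^]\<^bsub>G\<^esub> (1::int) = a [^]\<^bsub>G\<^esub> (1 mod k) \<otimes>\<^bsub>G\<^esub> a [^]\<^bsub>G\<^esub> (k * (1 div k))"
    by (rule apow_split)
  then have "a = a [^]\<^bsub>G\<^esub> (1 mod k) \<otimes>\<^bsub>G\<^esub> a [^]\<^bsub>G\<^esub> (k * (1 div k))"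
    by (rule trans[OF G.int_pow_1[OF aG, symmetric]])
  then show ?thesis unfolding b_def using L'I[OF Lk_pow[of "1 div k"], of "1 mod k"] by simp
qed

lemma part_c: "{p \<in> L'. snd p \<in> iota ` carrier H} = (\<lambda>(x, y). (x, iota y)) ` L"
proof
  show "{p \<in> L'. snd p \<in> iota ` carrier H} \<subseteq> (\<lambda>(x, y). (x, iota y)) ` L"
  proof
    fix p assume "p \<in> {p \<in> L'. snd p \<in> iota ` carrier H}"
    then obtain x y r where p: "p = (a [^]\<^bsub>G\<^esub> r \<otimes>\<^bsub>G\<^esub> x, (y, r))" and xy: "(x, y) \<in> L"
      and r0: "r = 0"
      by (auto simp: iota_def elim!: L'E)
    have "x \<in> carrier G" using xy L_carrier by auto
    then show "p \<in> (\<lambda>(x, y). (x, iota y)) ` L" using p r0 xy by (force simp: iota_def)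
  qed
next
  show "(\<lambda>(x, y). (x, iota y)) ` L \<subseteq> {p \<in> L'. snd p \<in> iota ` carrier H}"
  proof
    fix p assume "p \<in> (\<lambda>(x, y). (x, iota y)) ` L"
    then obtain x y where p: "p = (x, (y, 0))" and xy: "(x, y) \<in> L" by (auto simp: iota_def)
    have c: "x \<in> carrier G" "y \<in> carrier H" using xy L_carrier by auto
    have "(a [^]\<^bsub>G\<^esub> (0::int) \<otimes>\<^bsub>G\<^esub> x, (y, 0::int)) \<in> L'" using L'I[OF xy zero_R] .
    then show "p \<in> {p \<in> L'. snd p \<in> iota ` carrier H}" using p c by (auto simp: iota_def)
  qed
qed

lemma part_d1: "proj_set L W = proj_set L' (iota ` W)"
proof -
  have "{p \<in> L'. snd p \<in> iota ` W} = (\<lambda>(x, y). (x, iota y)) ` {p \<in> L. snd p \<in> W}"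
  proof (intro equalityI subsetI)
    fix p assume "p \<in> {p \<in> L'. snd p \<in> iota ` W}"
    then obtain x y r where p: "p = (a [^]\<^bsub>G\<^esub> r \<otimes>\<^bsub>G\<^esub> x, (y, r))" and xy: "(x, y) \<in> L"
      and r0: "r = 0" and yW: "y \<in> W"
      by (auto simp: iota_def elim!: L'E)
    have "x \<in> carrier G" using xy L_carrier by auto
    then show "p \<in> (\<lambda>(x, y). (x, iota y)) ` {p \<in> L. snd p \<in> W}" using p r0 xy yW by (force simp: iota_def)
  next
    fix p assume "p \<in> (\<lambda>(x, y). (x, iota y)) ` {p \<in> L. snd p \<in> W}"
    then obtain x y where p: "p = (x, (y, 0))" and xy: "(x, y) \<in> L" and yW: "y \<in> W" by (auto simp: iota_def)
    have c: "x \<in> carrier G" "y \<in> carrier H" using xy L_carrier by auto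
    have "(a [^]\<^bsub>G\<^esub> (0::int) \<otimes>\<^bsub>G\<^esub> x, (y, 0::int)) \<in> L'" using L'I[OF xy zero_R] .
    then show "p \<in> {p \<in> L'. snd p \<in> iota ` W}" using p c yW by (auto simp: iota_def)
  qed
  then show ?thesis unfolding proj_set_def by (simp add: image_image case_prod_beta)
qed

lemma b_mult_iota: "h \<in> carrier H \<Longrightarrow> b \<otimes>\<^bsub>H'\<^esub> iota h = (y0 [^]\<^bsub>H\<^esub> (1 div k) \<otimes>\<^bsub>H\<^esub> h, 1 mod k)"
  unfolding b_def iota_def mult_H' using R_div[OF mod_R] R_mod[OF mod_R] by simp

lemma part_d2:
  assumes W: "W \<subseteq> carrier H"
  shows "(\<lambda>x. a \<otimes>\<^bsub>G\<^esub> x) ` proj_set L W = proj_set L' ((\<lambda>y. b \<otimes>\<^bsub>H'\<^esub> y) ` iota ` W)"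
proof -
  define t where "t = 1 mod k"
  define c where "c = 1 div k"
  have "a [^]\<^bsub>G\<^esub> (1::int) = a [^]\<^bsub>G\<^esub> t \<otimes>\<^bsub>G\<^esub> a [^]\<^bsub>G\<^esub> (k * c)"
    unfolding t_def c_def by (rule apow_split)
  then have asplit: "a = a [^]\<^bsub>G\<^esub> t \<otimes>\<^bsub>G\<^esub> a [^]\<^bsub>G\<^esub> (k * c)"
    by (rule trans[OF G.int_pow_1[OF aG, symmetric]])
  have img: "(\<lambda>y. b \<otimes>\<^bsub>H'\<^esub> y) ` iota ` W = (\<lambda>w. (y0 [^]\<^bsub>H\<^esub> c \<otimes>\<^bsub>H\<^esub> w, t)) ` W"
    unfolding image_image
    by (rule image_cong[OF refl]) (simp add: b_mult_iota subsetD[OF W] t_def c_def)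
  show ?thesis
  proof (intro equalityI subsetI)
    fix z assume "z \<in> (\<lambda>x. a \<otimes>\<^bsub>G\<^esub> x) ` proj_set L W"
    then obtain x w where z: "z = a \<otimes>\<^bsub>G\<^esub> x" and xw: "(x, w) \<in> L" and wW: "w \<in> W"
      unfolding proj_set_def by force
    have x: "x \<in> carrier G" using xw L_carrier by auto
    have XY: "(a [^]\<^bsub>G\<^esub> (k * c) \<otimes>\<^bsub>G\<^esub> x, y0 [^]\<^bsub>H\<^esub> c \<otimes>\<^bsub>H\<^esub> w) \<in> L"
      using L_mult[OF Lk_pow xw] .
    have "a \<otimes>\<^bsub>G\<^esub> x = (a [^]\<^bsub>G\<^esub> t \<otimes>\<^bsub>G\<^esub> a [^]\<^bsub>G\<^esub> (k * c)) \<otimes>\<^bsub>G\<^esub> x"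
      by (rule arg_cong[where f="\<lambda>u. u \<otimes>\<^bsub>G\<^esub> x"], rule asplit)
    also have "\<dots> = a [^]\<^bsub>G\<^esub> t \<otimes>\<^bsub>G\<^esub> (a [^]\<^bsub>G\<^esub> (k * c) \<otimes>\<^bsub>G\<^esub> x)"
      using x by (simp add: G.m_assoc)
    finally have "z = a [^]\<^bsub>G\<^esub> t \<otimes>\<^bsub>G\<^esub> (a [^]\<^bsub>G\<^esub> (k * c) \<otimes>\<^bsub>G\<^esub> x)"
      using z by simp
    then have "(z, (y0 [^]\<^bsub>H\<^esub> c \<otimes>\<^bsub>H\<^esub> w, t)) \<in> L'"
      using L'I[OF XY, of t] by (simp add: t_def)
    then show "z \<in> proj_set L' ((\<lambda>y. b \<otimes>\<^bsub>H'\<^esub> y) ` iota ` W)"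
      unfolding proj_set_def img using wW by force
  next
    fix z assume "z \<in> proj_set L' ((\<lambda>y. b \<otimes>\<^bsub>H'\<^esub> y) ` iota ` W)"
    then obtain p w where pL: "p \<in> L'" and zp: "z = fst p" and pw: "snd p = (y0 [^]\<^bsub>H\<^esub> c \<otimes>\<^bsub>H\<^esub> w, t)" and wW: "w \<in> W"
      unfolding proj_set_def img by blast
    obtain x y r where p: "p = (a [^]\<^bsub>G\<^esub> r \<otimes>\<^bsub>G\<^esub> x, (y, r))" and xy: "(x, y) \<in> L" and "r \<in> R"
      using pL by (rule L'E)
    have z: "z = a [^]\<^bsub>G\<^esub> r \<otimes>\<^bsub>G\<^esub> x" using zp p by simp
    have e: "(y, r) = (y0 [^]\<^bsub>H\<^esub> c \<otimes>\<^bsub>H\<^esub> w, t)" using pw p by simp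
    have x: "x \<in> carrier G" using xy L_carrier by auto
    have w: "w \<in> carrier H" using wW W by auto
    have XY: "(inv\<^bsub>G\<^esub> (a [^]\<^bsub>G\<^esub> (k * c)) \<otimes>\<^bsub>G\<^esub> x, inv\<^bsub>H\<^esub> (y0 [^]\<^bsub>H\<^esub> c) \<otimes>\<^bsub>H\<^esub> y) \<in> L"
      using L_mult[OF L_inv[OF Lk_pow] xy] .
    have "inv\<^bsub>H\<^esub> (y0 [^]\<^bsub>H\<^esub> c) \<otimes>\<^bsub>H\<^esub> y = w"
      using e w by (simp add: H.m_assoc[symmetric])
    moreover have "a \<otimes>\<^bsub>G\<^esub> (inv\<^bsub>G\<^esub> (a [^]\<^bsub>G\<^esub> (k * c)) \<otimes>\<^bsub>G\<^esub> x) = z"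
    proof -
      have "a \<otimes>\<^bsub>G\<^esub> (inv\<^bsub>G\<^esub> (a [^]\<^bsub>G\<^esub> (k * c)) \<otimes>\<^bsub>G\<^esub> x)
         = (a [^]\<^bsub>G\<^esub> t \<otimes>\<^bsub>G\<^esub> a [^]\<^bsub>G\<^esub> (k * c)) \<otimes>\<^bsub>G\<^esub> (inv\<^bsub>G\<^esub> (a [^]\<^bsub>G\<^esub> (k * c)) \<otimes>\<^bsub>G\<^esub> x)"
        by (rule arg_cong[where f="\<lambda>u. u \<otimes>\<^bsub>G\<^esub> (inv\<^bsub>G\<^esub> (a [^]\<^bsub>G\<^esub> (k * c)) \<otimes>\<^bsub>G\<^esub> x)"], rule asplit)
      also have "\<dots> = a [^]\<^bsub>G\<^esub> t \<otimes>\<^bsub>G\<^esub> x" using x by (simp add: G.cancel1)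
      finally show ?thesis using z e by simp
    qed
    ultimately have XY': "(inv\<^bsub>G\<^esub> (a [^]\<^bsub>G\<^esub> (k * c)) \<otimes>\<^bsub>G\<^esub> x, w) \<in> L"
      and zX: "z = a \<otimes>\<^bsub>G\<^esub> (inv\<^bsub>G\<^esub> (a [^]\<^bsub>G\<^esub> (k * c)) \<otimes>\<^bsub>G\<^esub> x)"
      using XY by auto
    have "inv\<^bsub>G\<^esub> (a [^]\<^bsub>G\<^esub> (k * c)) \<otimes>\<^bsub>G\<^esub> x \<in> proj_set L W"
      unfolding proj_set_def
      by (rule image_eqI[where x="(inv\<^bsub>G\<^esub> (a [^]\<^bsub>G\<^esub> (k * c)) \<otimes>\<^bsub>G\<^esub> x, w)"]) (simp_all add: XY' wW)
    then show "z \<in> (\<lambda>x. a \<otimes>\<^bsub>G\<^esub> x) ` proj_set L W"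
      by (rule image_eqI[where f="\<lambda>x. a \<otimes>\<^bsub>G\<^esub> x", OF zX])
  qed
qed

end

lemma continuous_map_discrete_slices:
  assumes "\<And>r. r \<in> RR \<Longrightarrow> continuous_map XX Y (\<lambda>x. f (x, r))"
  shows "continuous_map (prod_topology XX (discrete_topology RR)) Y f"
proof (rule pasting_lemma[where I=RR and T="\<lambda>r. topspace XX \<times> {r}" and f="\<lambda>r. f"])
  fix r assume r: "r \<in> RR"
  show "openin (prod_topology XX (discrete_topology RR)) (topspace XX \<times> {r})"
    using r by (simp add: openin_prod_Times_iff)
  have eq: "subtopology (prod_topology XX (discrete_topology RR)) (topspace XX \<times> {r})
      = prod_topology XX (discrete_topology {r})"
    using r by (simp add: subtopology_Times subtopology_topspace insert_absorb)
  have "continuous_map (prod_topology XX (discrete_topology {r})) Y ((\<lambda>x. f (x, r)) \<circ> fst)"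
    by (rule continuous_map_compose[OF continuous_map_fst assms[OF r]])
  then show "continuous_map (subtopology (prod_topology XX (discrete_topology RR)) (topspace XX \<times> {r})) Y f"
    unfolding eq by (rule continuous_map_eq) auto
next
  fix x assume "x \<in> topspace (prod_topology XX (discrete_topology RR))"
  then show "\<exists>j. j \<in> RR \<and> x \<in> topspace XX \<times> {j} \<and> f x = f x" by (cases x) auto
qed auto

lemma lca_group_comm: "lca_group Gr T \<Longrightarrow> comm_group Gr" by (simp add: lca_group_def)
lemma lca_topspace: "lca_group Gr T \<Longrightarrow> topspace T = carrier Gr" by (simp add: lca_group_def)

lemma lca_mult_cont:
  assumes "lca_group Gr T" "continuous_map XX T f" "continuous_map XX T g"
  shows "continuous_map XX T (\<lambda>x. f x \<otimes>\<^bsub>Gr\<^esub> g x)"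
proof -
  have m: "continuous_map (prod_topology T T) T (\<lambda>(x, y). x \<otimes>\<^bsub>Gr\<^esub> y)"
    using assms(1) by (simp add: lca_group_def)
  have "continuous_map XX T ((\<lambda>(x, y). x \<otimes>\<^bsub>Gr\<^esub> y) \<circ> (\<lambda>x. (f x, g x)))"
    by (rule continuous_map_compose[OF continuous_map_pairedI[OF assms(2,3)] m])
  then show ?thesis by (simp add: comp_def)
qed

lemma lca_inv_cont:
  assumes "lca_group Gr T" "continuous_map XX T f"
  shows "continuous_map XX T (\<lambda>x. inv\<^bsub>Gr\<^esub> f x)"
proof -
  have m: "continuous_map T T (\<lambda>x. inv\<^bsub>Gr\<^esub> x)"
    using assms(1) by (simp add: lca_group_def)
  show ?thesis using continuous_map_compose[OF assms(2) m] by (simp add: comp_def)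
qed

lemma lca_const_cont:
  assumes "lca_group Gr T" "c \<in> carrier Gr"
  shows "continuous_map XX T (\<lambda>x. c)"
  using assms by (simp add: lca_topspace)

lemma lca_transl_homeo:
  assumes "lca_group Gr T" "c \<in> carrier Gr"
  shows "homeomorphic_map T T (\<lambda>x. c \<otimes>\<^bsub>Gr\<^esub> x)"
proof -
  interpret comm_group Gr using lca_group_comm[OF assms(1)] .
  have ts: "topspace T = carrier Gr" using lca_topspace[OF assms(1)] .
  have c1: "continuous_map T T (\<lambda>x. c \<otimes>\<^bsub>Gr\<^esub> x)"
    by (rule lca_mult_cont[OF assms(1) lca_const_cont[OF assms] continuous_map_id[unfolded id_def]])
  have c2: "continuous_map T T (\<lambda>x. inv\<^bsub>Gr\<^esub> c \<otimes>\<^bsub>Gr\<^esub> x)"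
    by (rule lca_mult_cont[OF assms(1) lca_const_cont[OF assms(1)] continuous_map_id[unfolded id_def]])
       (use assms in simp)
  have "homeomorphic_maps T T (\<lambda>x. c \<otimes>\<^bsub>Gr\<^esub> x) (\<lambda>x. inv\<^bsub>Gr\<^esub> c \<otimes>\<^bsub>Gr\<^esub> x)"
    unfolding homeomorphic_maps_def using c1 c2 assms(2) ts
    by (simp add: m_assoc[symmetric])
  then show ?thesis using homeomorphic_map_maps by blast
qed

definition qtop :: "'a topology \<Rightarrow> ('a \<Rightarrow> 'b) \<Rightarrow> 'b topology" where
  "qtop XX f = topology (\<lambda>U. U \<subseteq> f ` topspace XX \<and> openin XX {x \<in> topspace XX. f x \<in> U})"

lemma qtop_istopology: "istopology (\<lambda>U. U \<subseteq> f ` topspace XX \<and> openin XX {x \<in> topspace XX. f x \<in> U})"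
  unfolding istopology_def
proof (rule conjI)
  show "\<forall>S T. S \<subseteq> f ` topspace XX \<and> openin XX {x \<in> topspace XX. f x \<in> S} \<longrightarrow>
     T \<subseteq> f ` topspace XX \<and> openin XX {x \<in> topspace XX. f x \<in> T} \<longrightarrow>
     S \<inter> T \<subseteq> f ` topspace XX \<and> openin XX {x \<in> topspace XX. f x \<in> S \<inter> T}"
  proof (intro allI impI)
    fix S T assume S: "S \<subseteq> f ` topspace XX \<and> openin XX {x \<in> topspace XX. f x \<in> S}"
      and T: "T \<subseteq> f ` topspace XX \<and> openin XX {x \<in> topspace XX. f x \<in> T}"
    have "{x \<in> topspace XX. f x \<in> S \<inter> T} = {x \<in> topspace XX. f x \<in> S} \<inter> {x \<in> topspace XX. f x \<in> T}" by auto
    then show "S \<inter> T \<subseteq> f ` topspace XX \<and> openin XX {x \<in> topspace XX. f x \<in> S \<inter> T}"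
      using S T by auto
  qed
  show "\<forall>K. (\<forall>U\<in>K. U \<subseteq> f ` topspace XX \<and> openin XX {x \<in> topspace XX. f x \<in> U}) \<longrightarrow>
     \<Union>K \<subseteq> f ` topspace XX \<and> openin XX {x \<in> topspace XX. f x \<in> \<Union>K}"
  proof (intro allI impI)
    fix K assume K: "\<forall>U\<in>K. U \<subseteq> f ` topspace XX \<and> openin XX {x \<in> topspace XX. f x \<in> U}"
    have "{x \<in> topspace XX. f x \<in> \<Union>K} = \<Union>((\<lambda>U. {x \<in> topspace XX. f x \<in> U}) ` K)" by auto
    moreover have "openin XX (\<Union>((\<lambda>U. {x \<in> topspace XX. f x \<in> U}) ` K))"
      using K by (intro openin_Union) auto
    ultimately show "\<Union>K \<subseteq> f ` topspace XX \<and> openin XX {x \<in> topspace XX. f x \<in> \<Union>K}"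
      using K by auto
  qed
qed

lemma openin_qtop: "openin (qtop XX f) U \<longleftrightarrow> U \<subseteq> f ` topspace XX \<and> openin XX {x \<in> topspace XX. f x \<in> U}"
  unfolding qtop_def by (simp only: topology_inverse'[OF qtop_istopology])

lemma topspace_qtop: "topspace (qtop XX f) = f ` topspace XX"
proof -
  have "openin (qtop XX f) (f ` topspace XX)"
  proof -
    have "{x \<in> topspace XX. f x \<in> f ` topspace XX} = topspace XX" by auto
    then show ?thesis unfolding openin_qtop by simp
  qed
  then have "f ` topspace XX \<subseteq> topspace (qtop XX f)" by (rule openin_subset)
  moreover have "topspace (qtop XX f) \<subseteq> f ` topspace XX"
    using openin_qtop[of XX f "topspace (qtop XX f)"] by simp
  ultimately show ?thesis by blast
qed

lemma quotient_map_qtop: "quotient_map XX (qtop XX f) f"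
  unfolding quotient_map_def topspace_qtop openin_qtop by auto

lemma cm_ff: "continuous_map (prod_topology (prod_topology A B) (prod_topology C D)) A (\<lambda>z. fst (fst z))"
  using continuous_map_compose[OF continuous_map_fst continuous_map_fst] by (simp add: comp_def)
lemma cm_fs: "continuous_map (prod_topology (prod_topology A B) (prod_topology C D)) C (\<lambda>z. fst (snd z))"
  using continuous_map_compose[OF continuous_map_snd continuous_map_fst] by (simp add: comp_def)
lemma cm_sf: "continuous_map (prod_topology (prod_topology A B) (prod_topology C D)) B (\<lambda>z. snd (fst z))"
  using continuous_map_compose[OF continuous_map_fst continuous_map_snd] by (simp add: comp_def)
lemma cm_ss: "continuous_map (prod_topology (prod_topology A B) (prod_topology C D)) D (\<lambda>z. snd (snd z))"
  using continuous_map_compose[OF continuous_map_snd continuous_map_snd] by (simp add: comp_def)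

context cps_setup
begin

definition TH' :: "('h \<times> int) topology" where "TH' = prod_topology TH (discrete_topology R)"

lemma topspace_TH: "topspace TH = carrier H" using lcaH by (simp add: lca_group_def)
lemma topspace_TG: "topspace TG = carrier G" using lcaG by (simp add: lca_group_def)

lemma topspace_TH': "topspace TH' = carrier H'"
  by (simp add: TH'_def topspace_TH carrier_H')

lemma H'_mult_cont: "continuous_map (prod_topology TH' TH') TH' (\<lambda>(x, y). x \<otimes>\<^bsub>H'\<^esub> y)"
proof -
  define F where "F = (\<lambda>z :: ('h \<times> 'h) \<times> (int \<times> int).
     (fst (fst z) \<otimes>\<^bsub>H\<^esub> snd (fst z) \<otimes>\<^bsub>H\<^esub> y0 [^]\<^bsub>H\<^esub> ((fst (snd z) + snd (snd z)) div k),
      (fst (snd z) + snd (snd z)) mod k))"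
  have cF: "continuous_map (prod_topology (prod_topology TH TH) (discrete_topology (R \<times> R))) TH' F"
  proof (rule continuous_map_discrete_slices)
    fix rs assume rs: "rs \<in> R \<times> R"
    have c1: "continuous_map (prod_topology TH TH) TH
        (\<lambda>x. fst x \<otimes>\<^bsub>H\<^esub> snd x \<otimes>\<^bsub>H\<^esub> y0 [^]\<^bsub>H\<^esub> ((fst rs + snd rs) div k))"
      by (intro lca_mult_cont[OF lcaH] continuous_map_fst continuous_map_snd lca_const_cont[OF lcaH]) simp
    have c2: "continuous_map (prod_topology TH TH) (discrete_topology R) (\<lambda>x. (fst rs + snd rs) mod k)"
      by simp
    show "continuous_map (prod_topology TH TH) TH' (\<lambda>x. F (x, rs))"
      unfolding TH'_def F_def using continuous_map_pairedI[OF c1 c2] by simp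
  qed
  define sw where "sw = (\<lambda>z :: ('h \<times> int) \<times> ('h \<times> int). ((fst (fst z), fst (snd z)), (snd (fst z), snd (snd z))))"
  have csw: "continuous_map (prod_topology TH' TH') (prod_topology (prod_topology TH TH) (discrete_topology (R \<times> R))) sw"
    unfolding sw_def TH'_def prod_topology_discrete_topology
    by (intro continuous_map_pairedI cm_ff cm_fs cm_sf cm_ss)
  have "continuous_map (prod_topology TH' TH') TH' (F \<circ> sw)"
    by (rule continuous_map_compose[OF csw cF])
  then show ?thesis
    by (rule continuous_map_eq) (auto simp: F_def sw_def H'_def)
qed

lemma H'_inv_cont: "continuous_map TH' TH' (\<lambda>x. inv\<^bsub>H'\<^esub> x)"
proof -
  define F where "F = (\<lambda>z :: 'h \<times> int. (inv\<^bsub>H\<^esub> fst z \<otimes>\<^bsub>H\<^esub> y0 [^]\<^bsub>H\<^esub> ((- snd z) div k), (- snd z) mod k))"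
  have cF: "continuous_map TH' TH' F"
    unfolding TH'_def
  proof (rule continuous_map_discrete_slices)
    fix r assume r: "r \<in> R"
    have c1: "continuous_map TH TH (\<lambda>x. inv\<^bsub>H\<^esub> x \<otimes>\<^bsub>H\<^esub> y0 [^]\<^bsub>H\<^esub> ((- r) div k))"
      by (intro lca_mult_cont[OF lcaH] lca_inv_cont[OF lcaH] continuous_map_id[unfolded id_def] lca_const_cont[OF lcaH]) simp
    have c2: "continuous_map TH (discrete_topology R) (\<lambda>x. (- r) mod k)"
      by simp
    show "continuous_map TH (prod_topology TH (discrete_topology R)) (\<lambda>x. F (x, r))"
      unfolding F_def using continuous_map_pairedI[OF c1 c2] by simp
  qed
  show ?thesis
  proof (rule continuous_map_eq[OF cF])
    fix x assume "x \<in> topspace TH'"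
    then obtain h n where x: "x = (h, n)" "h \<in> carrier H" "n \<in> R" by (auto simp: topspace_TH' carrier_H')
    show "F x = inv\<^bsub>H'\<^esub> x" unfolding x(1) F_def using inv_H'[OF x(2,3)] by simp
  qed
qed

lemma lca_H': "lca_group H' TH'"
  unfolding lca_group_def
proof (intro conjI)
  show "comm_group H'" by (rule comm_group_H')
  show "topspace TH' = carrier H'" by (rule topspace_TH')
  show "continuous_map (prod_topology TH' TH') TH' (\<lambda>(x, y). x \<otimes>\<^bsub>H'\<^esub> y)" by (rule H'_mult_cont)
  show "continuous_map TH' TH' (\<lambda>x. inv\<^bsub>H'\<^esub> x)" by (rule H'_inv_cont)
  show "Hausdorff_space TH'"
    unfolding TH'_def Hausdorff_space_prod_topology using lcaH by (simp add: lca_group_def)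
  show "locally_compact_space TH'"
    unfolding TH'_def locally_compact_space_prod_topology
    using lcaH by (simp add: lca_group_def locally_compact_space_discrete_topology)
qed

lemma iota_carrier: "iota ` carrier H = carrier H \<times> {0}" by (rule iota_img)

lemma iota_open: "openin TH' (iota ` carrier H)"
  unfolding iota_carrier TH'_def openin_prod_Times_iff using topspace_TH
  by (metis openin_topspace openin_discrete_topology empty_subsetI insert_subset zero_R)

lemma iota_closed: "closedin TH' (iota ` carrier H)"
  unfolding iota_carrier TH'_def closedin_prod_Times_iff using topspace_TH
  by (metis closedin_topspace closedin_discrete_topology empty_subsetI insert_subset zero_R)

lemma iota_homeo: "homeomorphic_map TH (subtopology TH' (iota ` carrier H)) iota"
proof -
  have sub: "subtopology TH' (iota ` carrier H) = prod_topology TH (discrete_topology {0})"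
    unfolding iota_carrier TH'_def subtopology_Times
    by (simp add: topspace_TH[symmetric] subtopology_topspace)
  have c1: "continuous_map TH (prod_topology TH (discrete_topology {0})) iota"
    unfolding iota_def by (intro continuous_map_pairedI continuous_map_id[unfolded id_def]) simp
  have c2: "continuous_map (prod_topology TH (discrete_topology {0::int})) TH fst"
    by (rule continuous_map_fst)
  have "homeomorphic_maps TH (prod_topology TH (discrete_topology {0})) iota fst"
    unfolding homeomorphic_maps_def using c1 c2 by (auto simp: iota_def)
  then show ?thesis unfolding sub using homeomorphic_map_maps by blast
qed

lemma metr_H': "metrizable_space TH \<Longrightarrow> metrizable_space TH'"
  unfolding TH'_def metrizable_space_prod_topology by simp

lemma snd_L': "snd ` L' = snd ` L \<times> R"
proof (intro equalityI subsetI)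
  fix z assume "z \<in> snd ` L'"
  then obtain p where p: "p \<in> L'" and z: "z = snd p" by blast
  obtain x y r where "p = (a [^]\<^bsub>G\<^esub> r \<otimes>\<^bsub>G\<^esub> x, (y, r))" "(x, y) \<in> L" "r \<in> R"
    using p by (rule L'E)
  then show "z \<in> snd ` L \<times> R" using z by force
next
  fix z assume "z \<in> snd ` L \<times> R"
  then obtain x y r where z: "z = (y, r)" and xy: "(x, y) \<in> L" and r: "r \<in> R" by force
  have "(a [^]\<^bsub>G\<^esub> r \<otimes>\<^bsub>G\<^esub> x, (y, r)) \<in> L'" by (rule L'I[OF xy r])
  then show "z \<in> snd ` L'" unfolding z by (rule image_eqI[rotated]) simp
qed

lemma dense_L': "TH' closure_of (snd ` L') = carrier H'"
  unfolding snd_L' TH'_def closure_of_Times denseL discrete_topology_closure_of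
  by (simp add: carrier_H')

end

context cps_setup
begin

lemma GH_rcos_self: "u \<in> carrier (G \<times>\<times> H) \<Longrightarrow> u \<in> L #>\<^bsub>G \<times>\<times> H\<^esub> u"
  by (rule group.rcos_self[OF GH_group _ L_sub])

lemma L'_discrete: "\<forall>p\<in>L'. \<exists>U. openin (prod_topology TG TH') U \<and> U \<inter> L' = {p}"
proof
  fix p assume pL: "p \<in> L'"
  obtain x y r where p: "p = (a [^]\<^bsub>G\<^esub> r \<otimes>\<^bsub>G\<^esub> x, (y, r))" and xy: "(x, y) \<in> L" and r: "r \<in> R"
    using pL by (rule L'E)
  have xc: "x \<in> carrier G" and yc: "y \<in> carrier H" using xy L_carrier by auto
  have "\<forall>z\<in>L. \<exists>U. openin (prod_topology TG TH) U \<and> U \<inter> L = {z}"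
    using latt by (simp add: is_lattice_def)
  then obtain U where U: "openin (prod_topology TG TH) U" and UL: "U \<inter> L = {(x, y)}"
    using xy by blast
  define A where "A = inv\<^bsub>G\<^esub> (a [^]\<^bsub>G\<^esub> r)"
  have A: "A \<in> carrier G" by (simp add: A_def)
  define \<psi> where "\<psi> = (\<lambda>z :: 'g \<times> ('h \<times> int). (A \<otimes>\<^bsub>G\<^esub> fst z, fst (snd z)))"
  have c1: "continuous_map (prod_topology TG TH') TG (\<lambda>z. A \<otimes>\<^bsub>G\<^esub> fst z)"
    by (rule lca_mult_cont[OF lcaG lca_const_cont[OF lcaG A] continuous_map_fst])
  have c2: "continuous_map (prod_topology TG TH') TH (\<lambda>z. fst (snd z))"
    using continuous_map_compose[OF continuous_map_snd continuous_map_fst[of TH "discrete_topology R"]]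
    by (simp add: TH'_def comp_def)
  have c\<psi>: "continuous_map (prod_topology TG TH') (prod_topology TG TH) \<psi>"
    unfolding \<psi>_def by (rule continuous_map_pairedI[OF c1 c2])
  define U' where "U' = {z \<in> topspace (prod_topology TG TH'). \<psi> z \<in> U} \<inter> (topspace TG \<times> (topspace TH \<times> {r}))"
  have o1: "openin (prod_topology TG TH') {z \<in> topspace (prod_topology TG TH'). \<psi> z \<in> U}"
    by (rule openin_continuous_map_preimage[OF c\<psi> U])
  have o2: "openin (prod_topology TG TH') (topspace TG \<times> (topspace TH \<times> {r}))"
    using r by (simp add: openin_prod_Times_iff TH'_def)
  have oU': "openin (prod_topology TG TH') U'"
    unfolding U'_def by (rule openin_Int[OF o1 o2])
  have canc: "\<And>z. z \<in> carrier G \<Longrightarrow> A \<otimes>\<^bsub>G\<^esub> (a [^]\<^bsub>G\<^esub> r \<otimes>\<^bsub>G\<^esub> z) = z"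
    unfolding A_def by (simp add: G.m_assoc[symmetric])
  have "U' \<inter> L' = {p}"
  proof (intro equalityI subsetI)
    fix z assume z: "z \<in> U' \<inter> L'"
    obtain x' y' s where zz: "z = (a [^]\<^bsub>G\<^esub> s \<otimes>\<^bsub>G\<^esub> x', (y', s))" and xy': "(x', y') \<in> L" and "s \<in> R"
      using z by (auto elim: L'E)
    have xc': "x' \<in> carrier G" using xy' L_carrier by auto
    have sr: "s = r" using z zz by (simp add: U'_def)
    have "\<psi> z \<in> U" using z by (simp add: U'_def)
    then have "(x', y') \<in> U" unfolding \<psi>_def zz sr using canc[OF xc'] by simp
    then have "(x', y') = (x, y)" using UL xy' by blast
    then show "z \<in> {p}" using zz sr p by simp
  next
    fix z assume "z \<in> {p}"
    then have z: "z = p" by simp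
    have "\<psi> p = (x, y)" unfolding \<psi>_def p using canc[OF xc] by simp
    moreover have "(x, y) \<in> U" using UL by blast
    moreover have "p \<in> topspace (prod_topology TG TH')"
      unfolding p using xc yc r by (simp add: topspace_TG TH'_def topspace_TH)
    ultimately have "p \<in> U'" unfolding U'_def using p by (simp add: topspace_TG topspace_TH TH'_def)
    then show "z \<in> U' \<inter> L'" using z pL by simp
  qed
  then show "\<exists>U. openin (prod_topology TG TH') U \<and> U \<inter> L' = {p}" using oU' by blast
qed

definition emb :: "'g \<times> 'h \<Rightarrow> 'g \<times> ('h \<times> int)" where "emb z = (fst z, (snd z, 0))"

lemma emb_cont: "continuous_map (prod_topology TG TH) (prod_topology TG TH') emb"
  unfolding emb_def TH'_def
  by (intro continuous_map_pairedI continuous_map_fst continuous_map_snd) simp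

lemma emb_mult: "u \<in> carrier (G \<times>\<times> H) \<Longrightarrow> v \<in> carrier (G \<times>\<times> H) \<Longrightarrow>
   emb (u \<otimes>\<^bsub>G \<times>\<times> H\<^esub> v) = emb u \<otimes>\<^bsub>G \<times>\<times> H'\<^esub> emb v"
  by (cases u; cases v) (simp add: emb_def mult_H')

lemma emb_L: "l \<in> L \<Longrightarrow> emb l \<in> L'"
proof -
  assume l: "l \<in> L"
  obtain x y where lxy: "l = (x, y)" by (cases l)
  have xc: "x \<in> carrier G" using l lxy L_carrier by auto
  have "(a [^]\<^bsub>G\<^esub> (0::int) \<otimes>\<^bsub>G\<^esub> x, (y, 0::int)) \<in> L'" using L'I[OF l[unfolded lxy] zero_R] .
  then show ?thesis using xc by (simp add: emb_def lxy)
qed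

lemma L'_rcos_absorb: "l \<in> L' \<Longrightarrow> w \<in> carrier (G \<times>\<times> H') \<Longrightarrow>
   L' #>\<^bsub>G \<times>\<times> H'\<^esub> (l \<otimes>\<^bsub>G \<times>\<times> H'\<^esub> w) = L' #>\<^bsub>G \<times>\<times> H'\<^esub> w"
proof -
  assume l: "l \<in> L'" and w: "w \<in> carrier (G \<times>\<times> H')"
  have sub: "L' \<subseteq> carrier (G \<times>\<times> H')" using subgroup.subset[OF L'_sub] .
  have lc: "l \<in> carrier (G \<times>\<times> H')" using l sub by blast
  have "L' #>\<^bsub>G \<times>\<times> H'\<^esub> (l \<otimes>\<^bsub>G \<times>\<times> H'\<^esub> w) = (L' #>\<^bsub>G \<times>\<times> H'\<^esub> l) #>\<^bsub>G \<times>\<times> H'\<^esub> w"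
    using group.coset_mult_assoc[OF GH'_group sub lc w] by simp
  also have "L' #>\<^bsub>G \<times>\<times> H'\<^esub> l = L'"
    by (rule subgroup.rcos_const[OF L'_sub GH'_group l])
  finally show ?thesis .
qed

lemma L'_cocompact: "\<exists>Q :: ('g \<times> ('h \<times> int)) set topology.
   quotient_map (prod_topology TG TH') Q (\<lambda>x. L' #>\<^bsub>G \<times>\<times> H'\<^esub> x) \<and> compact_space Q"
proof -
  obtain Q :: "('g \<times> 'h) set topology" where qQ: "quotient_map (prod_topology TG TH) Q (\<lambda>x. L #>\<^bsub>G \<times>\<times> H\<^esub> x)"
    and cQ: "compact_space Q"
    using latt by (auto simp: is_lattice_def)
  define f' where "f' = (\<lambda>x. L' #>\<^bsub>G \<times>\<times> H'\<^esub> x)"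
  define Q' where "Q' = qtop (prod_topology TG TH') f'"
  have qQ': "quotient_map (prod_topology TG TH') Q' f'" unfolding Q'_def by (rule quotient_map_qtop)
  have ch: "continuous_map (prod_topology TG TH) Q' (f' \<circ> emb)"
    by (rule continuous_map_compose[OF emb_cont quotient_imp_continuous_map[OF qQ']])
  have fib: "(f' \<circ> emb) u = (f' \<circ> emb) v"
    if u: "u \<in> topspace (prod_topology TG TH)" and v: "v \<in> topspace (prod_topology TG TH)"
      and e: "L #>\<^bsub>G \<times>\<times> H\<^esub> u = L #>\<^bsub>G \<times>\<times> H\<^esub> v" for u v
  proof -
    have uc: "u \<in> carrier (G \<times>\<times> H)" and vc: "v \<in> carrier (G \<times>\<times> H)"
      using u v by (auto simp: topspace_TG topspace_TH)
    have "u \<in> L #>\<^bsub>G \<times>\<times> H\<^esub> v" using GH_rcos_self[OF uc] e by simp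
    then obtain l where l: "l \<in> L" and ul: "u = l \<otimes>\<^bsub>G \<times>\<times> H\<^esub> v"
      unfolding r_coset_def by blast
    have lc: "l \<in> carrier (G \<times>\<times> H)" using l L_carrier by auto
    have ev: "emb v \<in> carrier (G \<times>\<times> H')" using vc by (cases v) (simp add: emb_def carrier_H')
    have "emb u = emb l \<otimes>\<^bsub>G \<times>\<times> H'\<^esub> emb v" unfolding ul by (rule emb_mult[OF lc vc])
    then show ?thesis using L'_rcos_absorb[OF emb_L[OF l] ev] by (simp add: f'_def)
  qed
  have "\<exists>g. continuous_map Q Q' g \<and> g ` topspace Q = (f' \<circ> emb) ` topspace (prod_topology TG TH)"
  proof (rule quotient_map_lift_exists[OF qQ ch])
    fix x y assume "x \<in> topspace (prod_topology TG TH)" "y \<in> topspace (prod_topology TG TH)"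
      "L #>\<^bsub>G \<times>\<times> H\<^esub> x = L #>\<^bsub>G \<times>\<times> H\<^esub> y"
    then show "(f' \<circ> emb) x = (f' \<circ> emb) y" by (rule fib)
  next
    fix g assume "continuous_map Q Q' g" "g ` topspace Q = (f' \<circ> emb) ` topspace (prod_topology TG TH)"
    then show "\<exists>g. continuous_map Q Q' g \<and> g ` topspace Q = (f' \<circ> emb) ` topspace (prod_topology TG TH)"
      by blast
  qed
  then obtain g where cg: "continuous_map Q Q' g" and gimg: "g ` topspace Q = (f' \<circ> emb) ` topspace (prod_topology TG TH)"
    by blast
  have surj: "(f' \<circ> emb) ` topspace (prod_topology TG TH) = topspace Q'"
  proof (intro equalityI subsetI)
    fix q assume "q \<in> (f' \<circ> emb) ` topspace (prod_topology TG TH)"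
    then obtain u where u: "u \<in> topspace (prod_topology TG TH)" and q: "q = f' (emb u)" by auto
    have "emb u \<in> topspace (prod_topology TG TH')"
      using u by (cases u) (simp add: emb_def TH'_def)
    then show "q \<in> topspace Q'" unfolding q Q'_def topspace_qtop by blast
  next
    fix q assume "q \<in> topspace Q'"
    then obtain w where w: "w \<in> topspace (prod_topology TG TH')" and q: "q = f' w"
      unfolding Q'_def topspace_qtop by blast
    obtain g0 h r where wd: "w = (g0, (h, r))" and g0: "g0 \<in> carrier G" and h: "h \<in> carrier H" and r: "r \<in> R"
      using w by (cases w) (auto simp: TH'_def topspace_TG topspace_TH)
    define t where "t = (- r) mod k"
    define c where "c = (- r) div k"
    have tn: "t + r = k * (- c)" using mult_div_mod_eq[of k "-r"] unfolding t_def c_def by linarith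
    have m: "(t + r) mod k = 0" by (simp only: tn mod_mult_self1_is_0)
    define l where "l = (a [^]\<^bsub>G\<^esub> t \<otimes>\<^bsub>G\<^esub> \<one>\<^bsub>G\<^esub>, (\<one>\<^bsub>H\<^esub>, t))"
    have l: "l \<in> L'" unfolding l_def t_def by (rule L'I[OF L_one mod_R])
    have wc: "w \<in> carrier (G \<times>\<times> H')" using wd g0 h r by (simp add: carrier_H')
    define u where "u = (a [^]\<^bsub>G\<^esub> t \<otimes>\<^bsub>G\<^esub> \<one>\<^bsub>G\<^esub> \<otimes>\<^bsub>G\<^esub> g0, \<one>\<^bsub>H\<^esub> \<otimes>\<^bsub>H\<^esub> h \<otimes>\<^bsub>H\<^esub> y0 [^]\<^bsub>H\<^esub> ((t + r) div k))"
    have lw: "l \<otimes>\<^bsub>G \<times>\<times> H'\<^esub> w = emb u"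
      unfolding l_def wd u_def emb_def using m by (simp add: mult_H')
    have uc: "u \<in> topspace (prod_topology TG TH)"
      unfolding u_def using g0 h by (simp add: topspace_TG topspace_TH)
    have "q = f' (emb u)" unfolding q f'_def lw[symmetric] using L'_rcos_absorb[OF l wc] by simp
    then show "q \<in> (f' \<circ> emb) ` topspace (prod_topology TG TH)" using uc by auto
  qed
  have "compactin Q' (g ` topspace Q)"
    by (rule image_compactin[OF cQ[unfolded compact_space_def] cg])
  then have "compact_space Q'" unfolding compact_space_def gimg surj .
  then show ?thesis using qQ' unfolding f'_def by blast
qed

lemma cps_L': "cut_and_project G TG H' TH' L'"
  unfolding cut_and_project_def is_lattice_def
  using lcaG lca_H' L'_sub L'_discrete L'_cocompact L'_inj dense_L' by blast

end

lemma sigma_sets_homeo_image: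
  assumes hom: "homeomorphic_map T T f"
    and A: "A \<in> sigma_sets (topspace T) {U. openin T U}"
  shows "f ` A \<in> sigma_sets (topspace T) {U. openin T U}"
  using A
proof induct
  case (Basic a)
  then have "openin T a" by simp
  then have "openin T (f ` a)" using homeomorphic_map_openness[OF hom openin_subset] by blast
  then show ?case by (simp add: sigma_sets.Basic)
next
  case Empty
  then show ?case by (simp add: sigma_sets.Empty)
next
  case (Compl a)
  have sub: "a \<subseteq> topspace T"
    using sigma_sets_into_sp[OF _ Compl(1)] openin_subset by blast
  have inj: "inj_on f (topspace T)" using homeomorphic_imp_injective_map[OF hom] .
  have surj: "f ` topspace T = topspace T" using homeomorphic_imp_surjective_map[OF hom] .
  have "f ` (topspace T - a) = topspace T - f ` a"
    using inj_on_image_set_diff[OF inj _ sub, of "topspace T"] surj by simp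
  then show ?case using sigma_sets.Compl[OF Compl(2)] by simp
next
  case (Union a)
  have "f ` (\<Union>i. a i) = (\<Union>i. f ` a i)" by (rule image_UN)
  then show ?case using sigma_sets.Union[of "\<lambda>i. f ` a i"] Union(2) by simp
qed

context cps_setup
begin

definition NH :: "'h measure" where "NH = sigma (carrier H) {U. openin TH U}"

lemma opens_Pow: "{U. openin TH U} \<subseteq> Pow (carrier H)"
  using openin_subset topspace_TH by blast

lemma space_NH: "space NH = carrier H"
  unfolding NH_def by (rule space_measure_of[OF opens_Pow])
lemma sets_NH: "sets NH = sigma_sets (carrier H) {U. openin TH U}"
  unfolding NH_def by (rule sets_measure_of[OF opens_Pow])

lemma open_NH: "openin TH U \<Longrightarrow> U \<in> sets NH"
  unfolding sets_NH by (rule sigma_sets.Basic) simp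

lemma closed_NH: "closedin TH C \<Longrightarrow> C \<in> sets NH"
proof -
  assume C: "closedin TH C"
  then have "C \<subseteq> topspace TH \<and> openin TH (topspace TH - C)" by (simp add: closedin_def)
  then have "openin TH (carrier H - C)" "C \<subseteq> carrier H" using topspace_TH by auto
  then have "carrier H - (carrier H - C) \<in> sets NH"
    using sets.Diff[OF sets.top open_NH] space_NH by metis
  moreover have "carrier H - (carrier H - C) = C" using \<open>C \<subseteq> carrier H\<close> by blast
  ultimately show ?thesis by simp
qed

lemma transl_NH: "g \<in> carrier H \<Longrightarrow> A \<in> sets NH \<Longrightarrow> (\<lambda>h. g \<otimes>\<^bsub>H\<^esub> h) ` A \<in> sets NH"
  using sigma_sets_homeo_image[OF lca_transl_homeo[OF lcaH], of g A]
  unfolding sets_NH topspace_TH by simp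

lemma transl_H': "g \<in> carrier H \<Longrightarrow> r \<in> R \<Longrightarrow> A \<subseteq> carrier H \<Longrightarrow>
  (\<lambda>y. (g, r) \<otimes>\<^bsub>H'\<^esub> y) ` (A \<times> {0}) = (\<lambda>h. g \<otimes>\<^bsub>H\<^esub> h) ` A \<times> {r}"
proof -
  assume g: "g \<in> carrier H" and r: "r \<in> R" and A: "A \<subseteq> carrier H"
  have e: "(g, r) \<otimes>\<^bsub>H'\<^esub> (h, 0) = (g \<otimes>\<^bsub>H\<^esub> h, r)" if hc: "h \<in> carrier H" for h
  proof -
    have "(g, r) \<otimes>\<^bsub>H'\<^esub> (h, 0) = (g \<otimes>\<^bsub>H\<^esub> h \<otimes>\<^bsub>H\<^esub> y0 [^]\<^bsub>H\<^esub> (r div k), r mod k)"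
      using mult_H'[of g r h 0] by simp
    also have "\<dots> = (g \<otimes>\<^bsub>H\<^esub> h, r)" unfolding R_div[OF r] R_mod[OF r] using g hc by simp
    finally show ?thesis .
  qed
  show ?thesis
  proof (intro equalityI subsetI)
    fix z assume "z \<in> (\<lambda>y. (g, r) \<otimes>\<^bsub>H'\<^esub> y) ` (A \<times> {0})"
    then obtain h where h: "h \<in> A" and z: "z = (g, r) \<otimes>\<^bsub>H'\<^esub> (h, 0)" by blast
    have hc: "h \<in> carrier H" using h A by blast
    have "z = (g \<otimes>\<^bsub>H\<^esub> h, r)" using z e[OF hc] by simp
    then show "z \<in> (\<lambda>h. g \<otimes>\<^bsub>H\<^esub> h) ` A \<times> {r}" using h by simp
  next
    fix z assume "z \<in> (\<lambda>h. g \<otimes>\<^bsub>H\<^esub> h) ` A \<times> {r}"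
    then obtain h where h: "h \<in> A" and z: "z = (g \<otimes>\<^bsub>H\<^esub> h, r)" by blast
    have hc: "h \<in> carrier H" using h A by blast
    have "z = (g, r) \<otimes>\<^bsub>H'\<^esub> (h, 0)" using z e[OF hc] by simp
    then show "z \<in> (\<lambda>y. (g, r) \<otimes>\<^bsub>H'\<^esub> y) ` (A \<times> {0})" using h by blast
  qed
qed

definition nu :: "('h \<times> int) measure \<Rightarrow> 'h measure" where
  "nu \<mu> = distr (restrict_space \<mu> (carrier H \<times> {0})) NH fst"

lemma iota_cont: "continuous_map TH TH' (\<lambda>h. (h, 0))"
  unfolding TH'_def by (intro continuous_map_pairedI continuous_map_id[unfolded id_def]) simp

lemma nu_props:
  assumes hm: "haar_measure H' TH' \<mu>"
  shows "\<And>A. A \<in> sets NH \<Longrightarrow> A \<times> {0} \<in> sets \<mu> \<and> emeasure (nu \<mu>) A = emeasure \<mu> (A \<times> {0})"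
    and "haar_measure H TH (nu \<mu>)"
proof -
  have sp: "space \<mu> = carrier H \<times> R" using hm by (simp add: haar_measure_def topspace_TH' carrier_H')
  have st: "sets \<mu> = sigma_sets (topspace TH') {U. openin TH' U}" using hm by (simp add: haar_measure_def)
  have openS: "\<And>U. openin TH' U \<Longrightarrow> U \<in> sets \<mu>" unfolding st by (rule sigma_sets.Basic) simp
  define \<Omega> where "\<Omega> = carrier H \<times> {0::int}"
  have \<Omega>o: "openin TH' \<Omega>" unfolding \<Omega>_def using iota_open iota_carrier by simp
  have \<Omega>S: "\<Omega> \<in> sets \<mu>" by (rule openS[OF \<Omega>o])
  have \<Omega>sp: "\<Omega> \<inter> space \<mu> = \<Omega>" unfolding \<Omega>_def sp by auto
  define M0 where "M0 = restrict_space \<mu> \<Omega>"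
  have spM0: "space M0 = \<Omega>" unfolding M0_def space_restrict_space \<Omega>sp ..
  have setsM0: "sets M0 = (\<inter>) \<Omega> ` sets \<mu>" unfolding M0_def by (rule sets_restrict_space)
  have nu_eq: "nu \<mu> = distr M0 NH fst" unfolding nu_def M0_def \<Omega>_def ..
  have meas: "fst \<in> measurable M0 NH"
    unfolding NH_def
  proof (rule measurable_measure_of[OF opens_Pow])
    show "fst \<in> space M0 \<rightarrow> carrier H" unfolding spM0 \<Omega>_def by auto
  next
    fix U assume "U \<in> {U. openin TH U}"
    then have U: "openin TH U" by simp
    then have Usub: "U \<subseteq> carrier H" using openin_subset topspace_TH by blast
    have "openin TH' (U \<times> {0})" unfolding TH'_def openin_prod_Times_iff using U by simp
    then have "U \<times> {0} \<in> sets \<mu>" by (rule openS)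
    moreover have "fst -` U \<inter> space M0 = \<Omega> \<inter> (U \<times> {0})" unfolding spM0 \<Omega>_def using Usub by auto
    ultimately show "fst -` U \<inter> space M0 \<in> sets M0" unfolding setsM0 by blast
  qed
  show key: "A \<times> {0} \<in> sets \<mu> \<and> emeasure (nu \<mu>) A = emeasure \<mu> (A \<times> {0})" if A: "A \<in> sets NH" for A
  proof -
    have Asub: "A \<subseteq> carrier H" using sets.sets_into_space[OF A] space_NH by simp
    have pre: "fst -` A \<inter> space M0 = A \<times> {0}" unfolding spM0 \<Omega>_def using Asub by auto
    have "A \<times> {0} \<in> sets M0" using measurable_sets[OF meas A] pre by simp
    then obtain S where S: "S \<in> sets \<mu>" and AS: "A \<times> {0} = \<Omega> \<inter> S" unfolding setsM0 by blast
    have AM: "A \<times> {0} \<in> sets \<mu>" unfolding AS by (rule sets.Int[OF \<Omega>S S])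
    have "emeasure (nu \<mu>) A = emeasure M0 (fst -` A \<inter> space M0)"
      unfolding nu_eq by (rule emeasure_distr[OF meas A])
    also have "\<dots> = emeasure M0 (A \<times> {0})" unfolding pre ..
    also have "\<dots> = emeasure \<mu> (A \<times> {0})"
      unfolding M0_def by (rule emeasure_restrict_space) (use \<Omega>sp \<Omega>S Asub \<Omega>_def in auto)
    finally show ?thesis using AM by simp
  qed
  have space_nu: "space (nu \<mu>) = carrier H" unfolding nu_eq space_distr space_NH ..
  have sets_nu: "sets (nu \<mu>) = sets NH" unfolding nu_eq sets_distr ..
  have inv\<mu>: "\<And>x A. x \<in> carrier H' \<Longrightarrow> A \<in> sets \<mu> \<Longrightarrow> emeasure \<mu> ((\<lambda>y. x \<otimes>\<^bsub>H'\<^esub> y) ` A) = emeasure \<mu> A"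
    using hm by (simp add: haar_measure_def)
  show "haar_measure H TH (nu \<mu>)"
    unfolding haar_measure_def
  proof (intro conjI allI ballI impI)
    show "space (nu \<mu>) = topspace TH" using space_nu topspace_TH by simp
    show "sets (nu \<mu>) = sigma_sets (topspace TH) {U. openin TH U}" using sets_nu sets_NH topspace_TH by simp
  next
    show "emeasure (nu \<mu>) (topspace TH) \<noteq> 0"
    proof
      assume z: "emeasure (nu \<mu>) (topspace TH) = 0"
      have cH: "carrier H \<in> sets NH" using sets.top[of NH] space_NH by simp
      have z0: "emeasure \<mu> (carrier H \<times> {0}) = 0" using key[OF cH] z topspace_TH by simp
      have "carrier H \<times> {r} \<in> null_sets \<mu>" if r: "r \<in> R" for r
      proof -
        have oc: "carrier H \<times> {0} \<in> sets \<mu>" using \<Omega>S \<Omega>_def by simp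
        have e: "(\<lambda>y. (\<one>\<^bsub>H\<^esub>, r) \<otimes>\<^bsub>H'\<^esub> y) ` (carrier H \<times> {0}) = carrier H \<times> {r}"
          using transl_H'[OF H.one_closed r order_refl] by simp
        have "openin TH' (carrier H \<times> {r})" unfolding TH'_def openin_prod_Times_iff using r openin_topspace[of TH] topspace_TH by auto
        then have "carrier H \<times> {r} \<in> sets \<mu>" by (rule openS)
        moreover have "emeasure \<mu> (carrier H \<times> {r}) = 0"
          using inv\<mu>[of "(\<one>\<^bsub>H\<^esub>, r)" "carrier H \<times> {0}"] e z0 oc r by (simp add: carrier_H')
        ultimately show ?thesis by (simp add: null_sets_def)
      qed
      then have "(\<Union>r\<in>R. carrier H \<times> {r}) \<in> null_sets \<mu>"
        by (intro null_sets_UN') (simp_all add: countableI_type)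
      moreover have "(\<Union>r\<in>R. carrier H \<times> {r}) = topspace TH'" by (auto simp: topspace_TH' carrier_H')
      ultimately have "emeasure \<mu> (topspace TH') = 0" by (simp add: null_sets_def)
      then show False using hm by (simp add: haar_measure_def)
    qed
  next
    fix x A assume x: "x \<in> carrier H" and A: "A \<in> sets (nu \<mu>)"
    have A': "A \<in> sets NH" using A sets_nu by simp
    have Asub: "A \<subseteq> carrier H" using sets.sets_into_space[OF A'] space_NH by simp
    have xA: "(\<lambda>y. x \<otimes>\<^bsub>H\<^esub> y) ` A \<in> sets NH" by (rule transl_NH[OF x A'])
    have "emeasure (nu \<mu>) ((\<lambda>y. x \<otimes>\<^bsub>H\<^esub> y) ` A) = emeasure \<mu> ((\<lambda>y. x \<otimes>\<^bsub>H\<^esub> y) ` A \<times> {0})"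
      using key[OF xA] by simp
    also have "(\<lambda>y. x \<otimes>\<^bsub>H\<^esub> y) ` A \<times> {0} = (\<lambda>y. (x, 0) \<otimes>\<^bsub>H'\<^esub> y) ` (A \<times> {0})"
      using transl_H'[OF x zero_R Asub] by simp
    also have "emeasure \<mu> \<dots> = emeasure \<mu> (A \<times> {0})"
      using inv\<mu>[of "(x, 0)" "A \<times> {0}"] key[OF A'] x by (simp add: carrier_H')
    also have "\<dots> = emeasure (nu \<mu>) A" using key[OF A'] by simp
    finally show "emeasure (nu \<mu>) ((\<lambda>y. x \<otimes>\<^bsub>H\<^esub> y) ` A) = emeasure (nu \<mu>) A" .
  next
    fix K assume K: "compactin TH K"
    have Hs: "Hausdorff_space TH" using lcaH by (simp add: lca_group_def)
    have KN: "K \<in> sets NH" by (rule closed_NH[OF compactin_imp_closedin[OF Hs K]])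
    have "compactin TH' (K \<times> {0})" unfolding TH'_def compactin_Times using K by simp
    then have "emeasure \<mu> (K \<times> {0}) < \<infinity>" using hm by (simp add: haar_measure_def)
    then show "emeasure (nu \<mu>) K < \<infinity>" using key[OF KN] by simp
  next
    fix A assume A: "A \<in> sets (nu \<mu>)"
    have A': "A \<in> sets NH" using A sets_nu by simp
    have "emeasure \<mu> (A \<times> {0}) = (INF U\<in>{U. openin TH' U \<and> A \<times> {0} \<subseteq> U}. emeasure \<mu> U)"
      using hm key[OF A'] by (simp add: haar_measure_def)
    also have "\<dots> = (INF U\<in>{U. openin TH U \<and> A \<subseteq> U}. emeasure (nu \<mu>) U)"
    proof (rule INF_eq)
      fix U' assume U': "U' \<in> {U. openin TH' U \<and> A \<times> {0} \<subseteq> U}"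
      define V where "V = {h \<in> topspace TH. (h, 0) \<in> U'}"
      have V: "openin TH V" unfolding V_def
        by (rule openin_continuous_map_preimage[OF iota_cont]) (use U' in simp)
      have AV: "A \<subseteq> V" using U' sets.sets_into_space[OF A'] space_NH topspace_TH by (auto simp: V_def)
      have "emeasure (nu \<mu>) V = emeasure \<mu> (V \<times> {0})" using key[OF open_NH[OF V]] by simp
      also have "\<dots> \<le> emeasure \<mu> U'"
        by (rule emeasure_mono) (use U' openS in \<open>auto simp: V_def\<close>)
      finally show "\<exists>j\<in>{U. openin TH U \<and> A \<subseteq> U}. emeasure (nu \<mu>) j \<le> emeasure \<mu> U'"
        using V AV by blast
    next
      fix V assume V: "V \<in> {U. openin TH U \<and> A \<subseteq> U}"
      have "openin TH' (V \<times> {0})" unfolding TH'_def openin_prod_Times_iff using V by simp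
      moreover have "A \<times> {0} \<subseteq> V \<times> {0}" using V by auto
      moreover have "emeasure \<mu> (V \<times> {0}) \<le> emeasure (nu \<mu>) V" using key[OF open_NH] V by simp
      ultimately show "\<exists>i\<in>{U. openin TH' U \<and> A \<times> {0} \<subseteq> U}. emeasure \<mu> i \<le> emeasure (nu \<mu>) V"
        by blast
    qed
    finally show "emeasure (nu \<mu>) A = (INF U\<in>{U. openin TH U \<and> A \<subseteq> U}. emeasure (nu \<mu>) U)"
      using key[OF A'] by simp
  next
    fix U assume U: "openin TH U"
    have Usub: "U \<subseteq> carrier H" using openin_subset[OF U] topspace_TH by simp
    have oU: "openin TH' (U \<times> {0})" unfolding TH'_def openin_prod_Times_iff using U by simp
    have "emeasure (nu \<mu>) U = emeasure \<mu> (U \<times> {0})" using key[OF open_NH[OF U]] by simp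
    also have "\<dots> = (SUP K\<in>{K. compactin TH' K \<and> K \<subseteq> U \<times> {0}}. emeasure \<mu> K)"
      using hm oU unfolding haar_measure_def by blast
    also have "\<dots> = (SUP K\<in>{K. compactin TH K \<and> K \<subseteq> U}. emeasure (nu \<mu>) K)"
    proof (rule SUP_eq)
      fix K' assume K': "K' \<in> {K. compactin TH' K \<and> K \<subseteq> U \<times> {0}}"
      define K where "K = fst ` K'"
      have cK: "compactin TH K" unfolding K_def
        by (rule image_compactin[of TH']) (use K' in \<open>simp_all add: TH'_def continuous_map_fst\<close>)
      have KU: "K \<subseteq> U" using K' by (auto simp: K_def)
      have KK: "K' = K \<times> {0}" using K' by (force simp: K_def)
      have Hs: "Hausdorff_space TH" using lcaH by (simp add: lca_group_def)
      have "emeasure \<mu> K' \<le> emeasure (nu \<mu>) K"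
        using key[OF closed_NH[OF compactin_imp_closedin[OF Hs cK]]] KK by simp
      then show "\<exists>j\<in>{K. compactin TH K \<and> K \<subseteq> U}. emeasure \<mu> K' \<le> emeasure (nu \<mu>) j"
        using cK KU by blast
    next
      fix K assume K: "K \<in> {K. compactin TH K \<and> K \<subseteq> U}"
      have Hs: "Hausdorff_space TH" using lcaH by (simp add: lca_group_def)
      have "compactin TH' (K \<times> {0})" unfolding TH'_def compactin_Times using K by simp
      moreover have "K \<times> {0} \<subseteq> U \<times> {0}" using K by auto
      moreover have "emeasure (nu \<mu>) K \<le> emeasure \<mu> (K \<times> {0})"
        using key[OF closed_NH[OF compactin_imp_closedin[OF Hs]]] K by simp
      ultimately show "\<exists>i\<in>{K. compactin TH' K \<and> K \<subseteq> U \<times> {0}}. emeasure (nu \<mu>) K \<le> emeasure \<mu> i"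
        by blast
    qed
    finally show "emeasure (nu \<mu>) U = (SUP K\<in>{K. compactin TH K \<and> K \<subseteq> U}. emeasure (nu \<mu>) K)" .
  qed
qed

end

context cps_setup
begin

lemma V_props:
  assumes g: "g \<in> carrier H" and r: "r \<in> R" and W: "W \<subseteq> carrier H"
  defines "V \<equiv> (\<lambda>w. g \<otimes>\<^bsub>H\<^esub> w) ` W \<times> {r}"
  shows "precompact_in TH W \<Longrightarrow> precompact_in TH' V"
    and "nonempty_interior TH W \<Longrightarrow> nonempty_interior TH' V"
    and "top_regular TH W \<Longrightarrow> top_regular TH' V"
    and "mt_regular H TH W \<Longrightarrow> mt_regular H' TH' V"
proof -
  define \<tau> where "\<tau> = (\<lambda>w. g \<otimes>\<^bsub>H\<^esub> w)"
  have hom: "homeomorphic_map TH TH \<tau>" unfolding \<tau>_def by (rule lca_transl_homeo[OF lcaH g])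
  have Wt: "W \<subseteq> topspace TH" using W topspace_TH by simp
  have rR: "R \<inter> {r} = {r}" using r by blast
  have clV: "TH' closure_of V = \<tau> ` (TH closure_of W) \<times> {r}"
    unfolding V_def TH'_def closure_of_Times discrete_topology_closure_of rR \<tau>_def[symmetric]
    using homeomorphic_map_closure_of[OF hom Wt] by simp
  have intV: "TH' interior_of V = \<tau> ` (TH interior_of W) \<times> {r}"
    unfolding V_def TH'_def interior_of_Times discrete_topology_interior_of rR \<tau>_def[symmetric]
    using homeomorphic_map_interior_of[OF hom Wt] by simp
  have cr: "compactin (discrete_topology R) {r}" using r by (simp add: compactin_discrete_topology)
  show "precompact_in TH W \<Longrightarrow> precompact_in TH' V"
  proof -
    assume "precompact_in TH W"
    then have c: "compactin TH (TH closure_of W)" by (simp add: precompact_in_def)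
    have "compactin TH (\<tau> ` (TH closure_of W))"
      using homeomorphic_map_compactness[OF hom closure_of_subset_topspace] c by simp
    then show ?thesis unfolding precompact_in_def clV unfolding TH'_def compactin_Times using cr by simp
  qed
  show "nonempty_interior TH W \<Longrightarrow> nonempty_interior TH' V"
    unfolding nonempty_interior_def intV by simp
  show "top_regular TH W \<Longrightarrow> top_regular TH' V"
  proof -
    assume "top_regular TH W"
    then have e: "TH closure_of W = TH closure_of (TH interior_of W)" by (simp add: top_regular_def)
    have "TH' closure_of (TH' interior_of V) = (TH closure_of (\<tau> ` (TH interior_of W))) \<times> {r}"
      unfolding intV unfolding TH'_def closure_of_Times discrete_topology_closure_of rR ..
    also have "\<dots> = \<tau> ` (TH closure_of (TH interior_of W)) \<times> {r}"
      using homeomorphic_map_closure_of[OF hom interior_of_subset_topspace] by simp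
    finally show ?thesis unfolding top_regular_def clV e by simp
  qed
  show "mt_regular H TH W \<Longrightarrow> mt_regular H' TH' V"
    unfolding mt_regular_def
  proof (intro allI impI)
    fix \<mu> assume mtW: "\<forall>\<mu>. haar_measure H TH \<mu> \<longrightarrow> emeasure \<mu> (TH closure_of W - TH interior_of W) = 0"
      and hm: "haar_measure H' TH' \<mu>"
    define B where "B = TH closure_of W - TH interior_of W"
    have BN: "B \<in> sets NH" unfolding B_def
      by (rule sets.Diff[OF closed_NH[OF closedin_closure_of] open_NH[OF openin_interior_of]])
    have cl_sub: "TH closure_of W \<subseteq> carrier H" using closure_of_subset_topspace[of TH W] topspace_TH by simp
    have int_sub: "TH interior_of W \<subseteq> carrier H" using interior_of_subset_topspace[of TH W] topspace_TH by simp
    have Bsub: "B \<subseteq> carrier H" unfolding B_def using cl_sub by (rule Diff_subset[THEN subset_trans])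
    have inj: "inj_on \<tau> (carrier H)" unfolding \<tau>_def by (rule H.inj_on_cmult[OF g])
    have "\<tau> ` B = \<tau> ` (TH closure_of W) - \<tau> ` (TH interior_of W)"
      unfolding B_def by (rule inj_on_image_set_diff[OF inj]) (use cl_sub int_sub in auto)
    then have "TH' closure_of V - TH' interior_of V = \<tau> ` B \<times> {r}"
      unfolding clV intV by auto
    also have "\<dots> = (\<lambda>y. (g, r) \<otimes>\<^bsub>H'\<^esub> y) ` (B \<times> {0})"
      unfolding \<tau>_def using transl_H'[OF g r Bsub] by simp
    finally have e: "TH' closure_of V - TH' interior_of V = (\<lambda>y. (g, r) \<otimes>\<^bsub>H'\<^esub> y) ` (B \<times> {0})" .
    have key: "B \<times> {0} \<in> sets \<mu> \<and> emeasure (nu \<mu>) B = emeasure \<mu> (B \<times> {0})"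
      by (rule nu_props(1)[OF hm BN])
    have inv: "\<forall>x\<in>carrier H'. \<forall>A\<in>sets \<mu>. emeasure \<mu> ((\<lambda>y. x \<otimes>\<^bsub>H'\<^esub> y) ` A) = emeasure \<mu> A"
      using hm unfolding haar_measure_def by blast
    have gr: "(g, r) \<in> carrier H'" using g r by (simp add: carrier_H')
    have "emeasure \<mu> (TH' closure_of V - TH' interior_of V) = emeasure \<mu> (B \<times> {0})"
      unfolding e using inv gr key by blast
    also have "\<dots> = emeasure (nu \<mu>) B" using key by simp
    also have "\<dots> = 0" using mtW nu_props(2)[OF hm] unfolding B_def by blast
    finally show "emeasure \<mu> (TH' closure_of V - TH' interior_of V) = 0" .
  qed
qed

lemma iota_V: "W \<subseteq> carrier H \<Longrightarrow> iota ` W = (\<lambda>w. \<one>\<^bsub>H\<^esub> \<otimes>\<^bsub>H\<^esub> w) ` W \<times> {0}"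
proof -
  assume W: "W \<subseteq> carrier H"
  have "(\<lambda>w. \<one>\<^bsub>H\<^esub> \<otimes>\<^bsub>H\<^esub> w) ` W = W"
    using W by (auto simp: image_iff) (metis H.l_one subsetD)+
  then show ?thesis using iota_img by simp
qed

lemma b_V: "W \<subseteq> carrier H \<Longrightarrow>
  (\<lambda>y. b \<otimes>\<^bsub>H'\<^esub> y) ` iota ` W = (\<lambda>w. y0 [^]\<^bsub>H\<^esub> (1 div k) \<otimes>\<^bsub>H\<^esub> w) ` W \<times> {1 mod k}"
proof -
  assume W: "W \<subseteq> carrier H"
  have "(\<lambda>y. b \<otimes>\<^bsub>H'\<^esub> y) ` iota ` W = (\<lambda>w. (y0 [^]\<^bsub>H\<^esub> (1 div k) \<otimes>\<^bsub>H\<^esub> w, 1 mod k)) ` W"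
    unfolding image_image by (rule image_cong[OF refl]) (simp add: b_mult_iota subsetD[OF W])
  then show ?thesis by auto
qed

lemma part_e:
  assumes W: "W \<subseteq> carrier H"
  shows "(precompact_in TH W \<longrightarrow>
           precompact_in TH' (iota ` W) \<and> precompact_in TH' ((\<lambda>y. b \<otimes>\<^bsub>H'\<^esub> y) ` iota ` W)) \<and>
        (nonempty_interior TH W \<longrightarrow>
           nonempty_interior TH' (iota ` W) \<and> nonempty_interior TH' ((\<lambda>y. b \<otimes>\<^bsub>H'\<^esub> y) ` iota ` W)) \<and>
        (top_regular TH W \<longrightarrow>
           top_regular TH' (iota ` W) \<and> top_regular TH' ((\<lambda>y. b \<otimes>\<^bsub>H'\<^esub> y) ` iota ` W)) \<and>
        (mt_regular H TH W \<longrightarrow>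
           mt_regular H' TH' (iota ` W) \<and> mt_regular H' TH' ((\<lambda>y. b \<otimes>\<^bsub>H'\<^esub> y) ` iota ` W))"
  unfolding b_V[OF W] unfolding iota_V[OF W]
  using V_props[OF H.one_closed zero_R W] V_props[OF y0pow_carrier[of "1 div k"] mod_R[of 1] W] by blast

end

theorem theorem2p2:
  fixes G :: "'g monoid" and TG :: "'g topology"
    and H :: "'h monoid" and TH :: "'h topology"
    and L :: "('g \<times> 'h) set" and a :: 'g
  assumes "cut_and_project G TG H TH L" and "a \<in> carrier G"
  shows "\<exists>(H' :: ('h \<times> int) monoid) (TH' :: ('h \<times> int) topology) L' b \<iota>.
     cut_and_project G TG H' TH' L' \<and> b \<in> carrier H' \<and>
     \<comment> \<open>(a) H is identified (via \<iota>) with an open and closed subgroup of H'\<close>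
     \<iota> \<in> hom H H' \<and> inj_on \<iota> (carrier H) \<and>
     subgroup (\<iota> ` carrier H) H' \<and>
     openin TH' (\<iota> ` carrier H) \<and> closedin TH' (\<iota> ` carrier H) \<and>
     homeomorphic_map TH (subtopology TH' (\<iota> ` carrier H)) \<iota> \<and>
     \<comment> \<open>(b)\<close>
     (a, b) \<in> L' \<and>
     \<comment> \<open>(c)\<close>
     {p \<in> L'. snd p \<in> \<iota> ` carrier H} = (\<lambda>(x, y). (x, \<iota> y)) ` L \<and>
     \<comment> \<open>(d)\<close>
     (\<forall>W \<subseteq> carrier H.
        proj_set L W = proj_set L' (\<iota> ` W) \<and>
        (\<lambda>x. a \<otimes>\<^bsub>G\<^esub> x) ` proj_set L W
          = proj_set L' ((\<lambda>y. b \<otimes>\<^bsub>H'\<^esub> y) ` \<iota> ` W)) \<and>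
     \<comment> \<open>(e)\<close>
     (\<forall>W \<subseteq> carrier H.
        (precompact_in TH W \<longrightarrow>
           precompact_in TH' (\<iota> ` W) \<and> precompact_in TH' ((\<lambda>y. b \<otimes>\<^bsub>H'\<^esub> y) ` \<iota> ` W)) \<and>
        (nonempty_interior TH W \<longrightarrow>
           nonempty_interior TH' (\<iota> ` W) \<and> nonempty_interior TH' ((\<lambda>y. b \<otimes>\<^bsub>H'\<^esub> y) ` \<iota> ` W)) \<and>
        (top_regular TH W \<longrightarrow>
           top_regular TH' (\<iota> ` W) \<and> top_regular TH' ((\<lambda>y. b \<otimes>\<^bsub>H'\<^esub> y) ` \<iota> ` W)) \<and>
        (mt_regular H TH W \<longrightarrow>
           mt_regular H' TH' (\<iota> ` W) \<and> mt_regular H' TH' ((\<lambda>y. b \<otimes>\<^bsub>H'\<^esub> y) ` \<iota> ` W))) \<and>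
     \<comment> \<open>(f)\<close>
     (metrizable_space TH \<longrightarrow> metrizable_space TH')"
proof -
  have cG: "comm_group G" and cH: "comm_group H"
    using assms(1) by (auto simp: cut_and_project_def lca_group_def)
  interpret C: cps_setup G H TG TH L a
    by (rule cps_setup.intro[OF cG cH]) (rule cps_setup_axioms.intro[OF assms])
  show ?thesis
    apply (rule exI[of _ C.H'], rule exI[of _ C.TH'], rule exI[of _ C.L'], rule exI[of _ C.b],
        rule exI[of _ C.iota])
    apply (intro conjI)
    using C.cps_L' C.b_carrier C.iota_hom C.iota_inj C.iota_subgroup C.iota_open C.iota_closed
      C.iota_homeo C.ab_L' C.part_c C.part_d1 C.part_d2 C.part_e C.metr_H'
    by blast+
qed

end
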